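(* Let $P_{B(K^{\pm})}$ be the unital associative complex algebra generated by elements $B_i^{+}, B_i^{-}$ ($i=1,2,\ldots$) and $K^{+}, K^{-}$ subject to the relations $$\big[\{B_i^{\xi}, B_j^{\eta}\}, B_k^{\epsilon}\big] = (\epsilon-\eta)\delta_{jk}B_i^{\xi} + (\epsilon-\xi)\delta_{ik}B_j^{\eta}\quad(\xi,\eta,\epsilon\in\{\pm1\},\ i,j,k=1,2,\ldots),$$ $$K^{+}K^{-} = K^{-}K^{+} = 1,\qquad \{K^{+}, B_i^{\pm}\} = 0 = \{K^{-}, B_i^{\pm}\}\quad (i=1,2,\ldots).$$ Then there is a unique algebra homomorphism $\Delta: P_{B(K^{\pm})}\to P_{B(K^{\pm})}\otimes P_{B(K^{\pm})}$ (ordinary tensor product algebra, $(a\otimes b)(c\otimes d)=ac\otimes bd$), a unique algebra homomorphism $\varepsilon: P_{B(K^{\pm})}\to\mathbb{C}$ and a unique algebra anti-homomorphism $S: P_{B(K^{\pm})}\to P_{B(K^{\pm})}$ with $$\Delta(B_i^{\pm}) = B_i^{\pm}\otimes 1 + K^{\pm}\otimes B_i^{\pm},\quad \Delta(K^{\pm}) = K^{\pm}\otimes K^{\pm},\quad \varepsilon(B_i^{\pm}) = 0,\quad \varepsilon(K^{\pm}) = 1,$$ $$S(B_i^{\pm}) = B_i^{\pm}K^{\mp},\qquad S(K^{\pm}) = K^{\mp},$$ for all $i=1,2,\ldots$, and with these maps $P_{B(K^{\pm})}$ is an (ordinary) Hopf algebra.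
   Context: $[A,B]=AB-BA$ and $\{A,B\}=AB+BA$; in the relations the signs $\xi,\eta,\epsilon$ are read as the integers $\pm1$. In the formulas for $\Delta$ and $S$ the upper signs correspond (e.g. $\Delta(B_i^{+}) = B_i^{+}\otimes 1 + K^{+}\otimes B_i^{+}$, $S(B_i^{+}) = B_i^{+}K^{-}$). *)

theory Defs
  imports "HOL-Library.Poly_Mapping" "HOL-Library.Product_Plus" Complex_Main
begin

datatype 'g word = Word "'g list"

instantiation word :: (type) monoid_add
begin
definition zero_word :: "'g word" where "zero_word = Word []"
fun plus_word :: "'g word \<Rightarrow> 'g word \<Rightarrow> 'g word" where
  "plus_word (Word a) (Word b) = Word (a @ b)"
instance
proof
  fix a b c :: "'g word"
  show "a + b + c = a + (b + c)" by (cases a; cases b; cases c) simp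
  show "0 + a = a" by (cases a) (simp add: zero_word_def)
  show "a + 0 = a" by (cases a) (simp add: zero_word_def)
qed
end

datatype sgn = Pl | Mi

fun sval :: "sgn \<Rightarrow> complex" where
  "sval Pl = 1" | "sval Mi = -1"

fun sneg :: "sgn \<Rightarrow> sgn" where
  "sneg Pl = Mi" | "sneg Mi = Pl"

text \<open>B s i stands for B_{i+1}^s (indices shifted to start at 0), K s for K^s.\<close>
datatype gen = B sgn nat | K sgn

text \<open>Free unital associative complex algebra on gen: finitely supported
  complex functions on words, with convolution product.\<close>
type_synonym F = "gen word \<Rightarrow>\<^sub>0 complex"
type_synonym F2 = "(gen word \<times> gen word) \<Rightarrow>\<^sub>0 complex"   (* F \<otimes> F *)
type_synonym F3 = "(gen word \<times> gen word \<times> gen word) \<Rightarrow>\<^sub>0 complex"  (* F \<otimes> F \<otimes> F *)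

definition smul :: "complex \<Rightarrow> ('k::monoid_add \<Rightarrow>\<^sub>0 complex) \<Rightarrow> ('k \<Rightarrow>\<^sub>0 complex)" where
  "smul c x = Poly_Mapping.single 0 c * x"

definition mono :: "'k \<Rightarrow> ('k \<Rightarrow>\<^sub>0 complex)" where
  "mono w = Poly_Mapping.single w 1"

definition X :: "gen \<Rightarrow> F" where
  "X g = mono (Word [g])"

definition Bg :: "sgn \<Rightarrow> nat \<Rightarrow> F" where "Bg s i = X (B s i)"
definition Kg :: "sgn \<Rightarrow> F" where "Kg s = X (K s)"

definition comm :: "'a::ring \<Rightarrow> 'a \<Rightarrow> 'a" where "comm a b = a * b - b * a"
definition acomm :: "'a::ring \<Rightarrow> 'a \<Rightarrow> 'a" where "acomm a b = a * b + b * a"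

definition tens :: "F \<Rightarrow> F \<Rightarrow> F2" where
  "tens a b = (\<Sum>u\<in>Poly_Mapping.keys a. \<Sum>v\<in>Poly_Mapping.keys b.
      Poly_Mapping.single (u, v) (Poly_Mapping.lookup a u * Poly_Mapping.lookup b v))"

definition tens21 :: "F2 \<Rightarrow> F \<Rightarrow> F3" where
  "tens21 a b = (\<Sum>p\<in>Poly_Mapping.keys a. \<Sum>t\<in>Poly_Mapping.keys b.
      Poly_Mapping.single (fst p, snd p, t) (Poly_Mapping.lookup a p * Poly_Mapping.lookup b t))"

definition tens12 :: "F \<Rightarrow> F2 \<Rightarrow> F3" where
  "tens12 a b = (\<Sum>u\<in>Poly_Mapping.keys a. \<Sum>p\<in>Poly_Mapping.keys b.
      Poly_Mapping.single (u, fst p, snd p) (Poly_Mapping.lookup a u * Poly_Mapping.lookup b p))"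

definition tlift :: "(F \<Rightarrow> F \<Rightarrow> ('k::monoid_add \<Rightarrow>\<^sub>0 complex)) \<Rightarrow> F2 \<Rightarrow> ('k \<Rightarrow>\<^sub>0 complex)" where
  "tlift h z = (\<Sum>p\<in>Poly_Mapping.keys z. smul (Poly_Mapping.lookup z p) (h (mono (fst p)) (mono (snd p))))"

inductive_set ideal_gen :: "'a::ring set \<Rightarrow> 'a set" for R :: "'a set" where
  zero: "0 \<in> ideal_gen R"
| gen: "r \<in> R \<Longrightarrow> r \<in> ideal_gen R"
| add: "x \<in> ideal_gen R \<Longrightarrow> y \<in> ideal_gen R \<Longrightarrow> x + y \<in> ideal_gen R"
| lmult: "x \<in> ideal_gen R \<Longrightarrow> a * x \<in> ideal_gen R"
| rmult: "x \<in> ideal_gen R \<Longrightarrow> x * a \<in> ideal_gen R"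

definition Rel :: "F set" where
  "Rel =
     {comm (acomm (Bg xi i) (Bg eta j)) (Bg ep k)
        - (smul ((sval ep - sval eta) * (if j = k then 1 else 0)) (Bg xi i)
           + smul ((sval ep - sval xi) * (if i = k then 1 else 0)) (Bg eta j))
      | xi eta ep i j k. True}
   \<union> {Kg Pl * Kg Mi - 1, Kg Mi * Kg Pl - 1}
   \<union> {acomm (Kg s) (Bg t i) | s t i. True}"

text \<open>P = F / I,  P\<otimes>P = F2 / I2,  P\<otimes>P\<otimes>P = F3 / I3.\<close>
definition I1 :: "F set" where "I1 = ideal_gen Rel"
definition I2 :: "F2 set" where
  "I2 = ideal_gen ({tens r 1 | r. r \<in> Rel} \<union> {tens 1 r | r. r \<in> Rel})"
definition I3 :: "F3 set" where
  "I3 = ideal_gen ({tens21 (tens r 1) 1 | r. r \<in> Rel} \<union> {tens21 (tens 1 r) 1 | r. r \<in> Rel}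
                    \<union> {tens21 (tens 1 1) r | r. r \<in> Rel})"

text \<open>D represents an algebra homomorphism F/Ia \<rightarrow> F'/Ib.\<close>
definition alg_hom_mod :: "('k::monoid_add \<Rightarrow>\<^sub>0 complex) set \<Rightarrow> ('l::monoid_add \<Rightarrow>\<^sub>0 complex) set
    \<Rightarrow> (('k \<Rightarrow>\<^sub>0 complex) \<Rightarrow> ('l \<Rightarrow>\<^sub>0 complex)) \<Rightarrow> bool" where
  "alg_hom_mod Ia Ib D \<longleftrightarrow>
     (\<forall>x y. x - y \<in> Ia \<longrightarrow> D x - D y \<in> Ib) \<and>
     (\<forall>x y. D (x + y) - (D x + D y) \<in> Ib) \<and>
     (\<forall>c x. D (smul c x) - smul c (D x) \<in> Ib) \<and>
     (\<forall>x y. D (x * y) - D x * D y \<in> Ib) \<and>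
     D 1 - 1 \<in> Ib"

text \<open>D represents an algebra anti-homomorphism F/Ia \<rightarrow> F'/Ib.\<close>
definition alg_antihom_mod :: "('k::monoid_add \<Rightarrow>\<^sub>0 complex) set \<Rightarrow> ('l::monoid_add \<Rightarrow>\<^sub>0 complex) set
    \<Rightarrow> (('k \<Rightarrow>\<^sub>0 complex) \<Rightarrow> ('l \<Rightarrow>\<^sub>0 complex)) \<Rightarrow> bool" where
  "alg_antihom_mod Ia Ib D \<longleftrightarrow>
     (\<forall>x y. x - y \<in> Ia \<longrightarrow> D x - D y \<in> Ib) \<and>
     (\<forall>x y. D (x + y) - (D x + D y) \<in> Ib) \<and>
     (\<forall>c x. D (smul c x) - smul c (D x) \<in> Ib) \<and>
     (\<forall>x y. D (x * y) - D y * D x \<in> Ib) \<and>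
     D 1 - 1 \<in> Ib"

text \<open>e represents an algebra homomorphism F/Ia \<rightarrow> \<complex>.\<close>
definition char_mod :: "('k::monoid_add \<Rightarrow>\<^sub>0 complex) set \<Rightarrow> (('k \<Rightarrow>\<^sub>0 complex) \<Rightarrow> complex) \<Rightarrow> bool" where
  "char_mod Ia e \<longleftrightarrow>
     (\<forall>x y. x - y \<in> Ia \<longrightarrow> e x = e y) \<and>
     (\<forall>x y. e (x + y) = e x + e y) \<and>
     (\<forall>c x. e (smul c x) = c * e x) \<and>
     (\<forall>x y. e (x * y) = e x * e y) \<and>
     e 1 = 1"

definition Delta_gens :: "(F \<Rightarrow> F2) \<Rightarrow> bool" where
  "Delta_gens D \<longleftrightarrow>
     (\<forall>s i. D (Bg s i) - (tens (Bg s i) 1 + tens (Kg s) (Bg s i)) \<in> I2) \<and>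
     (\<forall>s. D (Kg s) - tens (Kg s) (Kg s) \<in> I2)"

definition eps_gens :: "(F \<Rightarrow> complex) \<Rightarrow> bool" where
  "eps_gens e \<longleftrightarrow> (\<forall>s i. e (Bg s i) = 0) \<and> (\<forall>s. e (Kg s) = 1)"

definition S_gens :: "(F \<Rightarrow> F) \<Rightarrow> bool" where
  "S_gens S \<longleftrightarrow>
     (\<forall>s i. S (Bg s i) - Bg s i * Kg (sneg s) \<in> I1) \<and>
     (\<forall>s. S (Kg s) - Kg (sneg s) \<in> I1)"

definition hopf_axioms :: "(F \<Rightarrow> F2) \<Rightarrow> (F \<Rightarrow> complex) \<Rightarrow> (F \<Rightarrow> F) \<Rightarrow> bool" where
  "hopf_axioms D e S \<longleftrightarrow>
     alg_hom_mod I1 I2 D \<and> char_mod I1 e \<and>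
     \<comment> \<open>coassociativity: (\<Delta>\<otimes>id)\<Delta> = (id\<otimes>\<Delta>)\<Delta>\<close>
     (\<forall>x. tlift (\<lambda>a b. tens21 (D a) b) (D x) - tlift (\<lambda>a b. tens12 a (D b)) (D x) \<in> I3) \<and>
     \<comment> \<open>counit: (\<epsilon>\<otimes>id)\<Delta> = id = (id\<otimes>\<epsilon>)\<Delta>\<close>
     (\<forall>x. tlift (\<lambda>a b. smul (e a) b) (D x) - x \<in> I1) \<and>
     (\<forall>x. tlift (\<lambda>a b. smul (e b) a) (D x) - x \<in> I1) \<and>
     \<comment> \<open>antipode: m(S\<otimes>id)\<Delta> = \<eta>\<epsilon> = m(id\<otimes>S)\<Delta>\<close>
     (\<forall>x. tlift (\<lambda>a b. S a * b) (D x) - smul (e x) 1 \<in> I1) \<and>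
     (\<forall>x. tlift (\<lambda>a b. a * S b) (D x) - smul (e x) 1 \<in> I1)"

end

theory Submission
  imports Defs
begin


lemma lookup_smul: "Poly_Mapping.lookup (smul c x) k = c * Poly_Mapping.lookup x k"
  unfolding smul_def mult_map_scale_conv_mult[symmetric]
  by (simp add: Poly_Mapping.map.rep_eq when_def)

lemma pm_sum_rep: "(x::'a \<Rightarrow>\<^sub>0 complex) = (\<Sum>k\<in>Poly_Mapping.keys x. Poly_Mapping.single k (Poly_Mapping.lookup x k))"
  by (rule poly_mapping_eqI) (simp add: lookup_sum lookup_single when_def in_keys_iff)

lemma pm_induct[case_names zero single add]:
  fixes x :: "'a \<Rightarrow>\<^sub>0 complex"
  assumes "P 0" "\<And>k c. P (Poly_Mapping.single k c)" "\<And>x y. P x \<Longrightarrow> P y \<Longrightarrow> P (x + y)"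
  shows "P x"
proof -
  have "\<And>A. finite A \<Longrightarrow> P (\<Sum>k\<in>A. Poly_Mapping.single k (Poly_Mapping.lookup x k))"
  proof -
    fix A :: "'a set" assume "finite A"
    then show "P (\<Sum>k\<in>A. Poly_Mapping.single k (Poly_Mapping.lookup x k))"
      by (induction A rule: finite_induct) (auto intro: assms)
  qed
  then show ?thesis by (subst pm_sum_rep) simp
qed


lemma single0_central: "Poly_Mapping.single 0 c * (x::'k::monoid_add \<Rightarrow>\<^sub>0 complex) = x * Poly_Mapping.single 0 c"
proof (induction x rule: pm_induct)
  case (single k d) then show ?case by (simp add: mult_single mult.commute)
qed (auto simp: distrib_left distrib_right)

lemma smul_mult_left: "smul c (x*y) = smul c x * (y::'k::monoid_add \<Rightarrow>\<^sub>0 complex)"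
  by (simp add: smul_def mult.assoc)
lemma smul_mult_right: "smul c (x*y) = x * smul c (y::'k::monoid_add \<Rightarrow>\<^sub>0 complex)"
proof -
  have "Poly_Mapping.single 0 c * (x * y) = (Poly_Mapping.single 0 c * x) * y" by (simp add: mult.assoc)
  also have "\<dots> = (x * Poly_Mapping.single 0 c) * y" by (simp only: single0_central)
  finally show ?thesis by (simp add: smul_def mult.assoc)
qed

lemma smul_add: "smul c (x+y) = smul c x + smul c y"
  by (rule poly_mapping_eqI) (simp add: lookup_smul lookup_add algebra_simps)
lemma smul_add_c: "smul (c+d) x = smul c x + smul d x"
  by (rule poly_mapping_eqI) (simp add: lookup_smul lookup_add algebra_simps)
lemma smul_diff: "smul c (x-y) = smul c x - smul c y"
  by (rule poly_mapping_eqI) (simp add: lookup_smul lookup_minus algebra_simps)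
lemma smul_minus: "smul c (-x) = - smul c x"
  by (rule poly_mapping_eqI) (simp add: lookup_smul)
lemma smul_smul: "smul c (smul d x) = smul (c*d) x"
  by (rule poly_mapping_eqI) (simp add: lookup_smul)
lemma smul_one[simp]: "smul 1 x = x"
  by (rule poly_mapping_eqI) (simp add: lookup_smul)
lemma smul_zero_c[simp]: "smul 0 x = 0"
  by (rule poly_mapping_eqI) (simp add: lookup_smul)
lemma smul_zero[simp]: "smul c 0 = 0"
  by (rule poly_mapping_eqI) (simp add: lookup_smul)
lemma smul_single: "smul c (Poly_Mapping.single k d) = Poly_Mapping.single k (c*d)"
  by (rule poly_mapping_eqI) (simp add: lookup_smul lookup_single when_def)
lemma smul_of_int: "smul (of_int n) x = of_int n * x"
  by (simp add: smul_def)

lemma mono_add: "mono (u+v) = mono u * (mono v :: 'k::monoid_add \<Rightarrow>\<^sub>0 complex)"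
  by (simp add: mono_def mult_single)
lemma mono_zero[simp]: "mono 0 = (1 :: 'k::monoid_add \<Rightarrow>\<^sub>0 complex)"
  by (simp add: mono_def)

lemma ideal_neg: "x \<in> ideal_gen R \<Longrightarrow> - (x::'a::ring_1) \<in> ideal_gen R"
  using ideal_gen.lmult[of x R "-1"] by simp
lemma ideal_diff: "x \<in> ideal_gen R \<Longrightarrow> y \<in> ideal_gen R \<Longrightarrow> (x::'a::ring_1) - y \<in> ideal_gen R"
  using ideal_gen.add[of x R "-y"] ideal_neg[of y R] by (simp only: diff_conv_add_uminus)
lemma ideal_sandwich: "x \<in> ideal_gen R \<Longrightarrow> a * x * b \<in> ideal_gen R"
  by (intro ideal_gen.rmult ideal_gen.lmult)
lemma ideal_gen_sandwich: "x \<in> R \<Longrightarrow> a * x * b \<in> ideal_gen R"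
  by (intro ideal_sandwich ideal_gen.gen)
lemma ideal_smul: "x \<in> ideal_gen R \<Longrightarrow> smul c x \<in> ideal_gen R"
  unfolding smul_def by (rule ideal_gen.lmult)
lemma ideal_sum: "(\<And>i. i \<in> A \<Longrightarrow> f i \<in> ideal_gen R) \<Longrightarrow> sum f A \<in> ideal_gen R"
  by (induction A rule: infinite_finite_induct) (auto intro: ideal_gen.intros)

definition extW :: "(complex \<Rightarrow> 'b::ring_1) \<Rightarrow> ('k \<Rightarrow> 'b) \<Rightarrow> ('k \<Rightarrow>\<^sub>0 complex) \<Rightarrow> 'b" where
  "extW \<sigma> f x = (\<Sum>k\<in>Poly_Mapping.keys x. \<sigma> (Poly_Mapping.lookup x k) * f k)"

locale scal =
  fixes \<sigma> :: "complex \<Rightarrow> 'b::ring_1"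
  assumes sadd: "\<sigma> (a + b) = \<sigma> a + \<sigma> b"
    and smult: "\<sigma> (a * b) = \<sigma> a * \<sigma> b"
    and sone: "\<sigma> 1 = 1"
    and scentral: "\<sigma> a * y = y * \<sigma> a"
begin

lemma szero[simp]: "\<sigma> 0 = 0"
  using sadd[of 0 0] by simp

lemma extW_superset:
  assumes "finite A" "Poly_Mapping.keys x \<subseteq> A"
  shows "extW \<sigma> f x = (\<Sum>k\<in>A. \<sigma> (Poly_Mapping.lookup x k) * f k)"
  unfolding extW_def
  by (rule sum.mono_neutral_left) (use assms in \<open>auto simp: in_keys_iff\<close>)

lemma extW_add: "extW \<sigma> f (x + y) = extW \<sigma> f x + extW \<sigma> f y"
proof -
  let ?A = "Poly_Mapping.keys x \<union> Poly_Mapping.keys y"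
  have "extW \<sigma> f (x + y) = (\<Sum>k\<in>?A. \<sigma> (Poly_Mapping.lookup (x+y) k) * f k)"
    by (rule extW_superset) (auto simp: keys_add dest: set_mp[OF Poly_Mapping.keys_add])
  also have "\<dots> = (\<Sum>k\<in>?A. \<sigma> (Poly_Mapping.lookup x k) * f k) + (\<Sum>k\<in>?A. \<sigma> (Poly_Mapping.lookup y k) * f k)"
    by (simp add: lookup_add sadd distrib_right sum.distrib)
  also have "\<dots> = extW \<sigma> f x + extW \<sigma> f y"
    by (subst (1 2) extW_superset[of ?A]) auto
  finally show ?thesis .
qed

lemma extW_zero[simp]: "extW \<sigma> f 0 = 0"
  by (simp add: extW_def)

lemma extW_single[simp]: "extW \<sigma> f (Poly_Mapping.single k c) = \<sigma> c * f k"
  by (cases "c = 0") (simp_all add: extW_def)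

lemma extW_mult:
  assumes "\<And>u v. f (u + v) = f u * f v"
  shows "extW \<sigma> f (x * y) = extW \<sigma> f x * extW \<sigma> f (y::'k::monoid_add \<Rightarrow>\<^sub>0 complex)"
proof (induction x rule: pm_induct)
  case (single u c)
  show ?case
  proof (induction y rule: pm_induct)
    case (single v d)
    have "\<sigma> (c*d) * f (u+v) = \<sigma> c * f u * (\<sigma> d * f v)"
    proof -
      have "\<sigma> (c*d) * f (u+v) = \<sigma> c * (\<sigma> d * f u) * f v" by (simp add: assms smult mult.assoc)
      also have "\<dots> = \<sigma> c * (f u * \<sigma> d) * f v" by (simp only: scentral)
      finally show ?thesis by (simp add: mult.assoc)
    qed
    then show ?case by (simp add: mult_single)
  qed (simp_all add: distrib_left extW_add)
qed (simp_all add: distrib_right extW_add)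

lemma extW_antimult:
  assumes "\<And>u v. f (u + v) = f v * f u"
  shows "extW \<sigma> f (x * y) = extW \<sigma> f y * extW \<sigma> f (x::'k::monoid_add \<Rightarrow>\<^sub>0 complex)"
proof (induction x rule: pm_induct)
  case (single u c)
  show ?case
  proof (induction y rule: pm_induct)
    case (single v d)
    have "\<sigma> (c*d) * f (u+v) = \<sigma> d * f v * (\<sigma> c * f u)"
    proof -
      have "\<sigma> (c*d) = \<sigma> d * \<sigma> c" by (metis mult.commute smult)
      then have "\<sigma> (c*d) * f (u+v) = \<sigma> d * (\<sigma> c * f v) * f u" by (simp add: assms mult.assoc)
      also have "\<dots> = \<sigma> d * (f v * \<sigma> c) * f u" by (simp only: scentral)
      finally show ?thesis by (simp add: mult.assoc)
    qed
    then show ?case by (simp add: mult_single)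
  qed (simp_all add: distrib_right distrib_left extW_add)
qed (simp_all add: distrib_left distrib_right extW_add)

lemma extW_neg: "extW \<sigma> f (- x) = - extW \<sigma> f x"
  using extW_add[of f x "-x"] by (simp add: eq_neg_iff_add_eq_0 add.commute)
lemma extW_diff: "extW \<sigma> f (x - y) = extW \<sigma> f x - extW \<sigma> f y"
  using extW_add[of f x "-y"] by (simp add: extW_neg)

lemma extW_smul:
  shows "extW \<sigma> f (smul c x) = \<sigma> c * extW \<sigma> f x"
proof (induction x rule: pm_induct)
  case (single k d) then show ?case by (simp add: smul_single smult mult.assoc)
qed (simp_all add: smul_add extW_add distrib_left)

lemma extW_one: "f 0 = 1 \<Longrightarrow> extW \<sigma> f 1 = 1"
  using extW_single[of f 0 1] by (simp add: sone)

end

lemma scal_single0: "scal (\<lambda>c. Poly_Mapping.single (0::'k::monoid_add) c)"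
  by unfold_locales (simp_all add: single_add mult_single single0_central)
lemma scal_id: "scal (\<lambda>c. c)"
  by unfold_locales simp_all


lemma lookup_tens: "Poly_Mapping.lookup (tens a b) (u,v) = Poly_Mapping.lookup a u * Poly_Mapping.lookup b v"
proof -
  have "Poly_Mapping.lookup (tens a b) (u,v) =
    (\<Sum>u'\<in>Poly_Mapping.keys a. if u' = u then (\<Sum>v'\<in>Poly_Mapping.keys b. if v' = v then Poly_Mapping.lookup a u * Poly_Mapping.lookup b v else 0) else 0)"
    unfolding tens_def lookup_sum lookup_single when_def
    by (intro sum.cong refl) auto
  also have "\<dots> = Poly_Mapping.lookup a u * Poly_Mapping.lookup b v"
    by (simp add: in_keys_iff)
  finally show ?thesis .
qed

lemma lookup_tens21: "Poly_Mapping.lookup (tens21 z t) (u,v,w) = Poly_Mapping.lookup z (u,v) * Poly_Mapping.lookup t w"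
proof -
  have "Poly_Mapping.lookup (tens21 z t) (u,v,w) =
    (\<Sum>p\<in>Poly_Mapping.keys z. if p = (u,v) then (\<Sum>t'\<in>Poly_Mapping.keys t. if t' = w then Poly_Mapping.lookup z (u,v) * Poly_Mapping.lookup t w else 0) else 0)"
    unfolding tens21_def lookup_sum lookup_single when_def
    apply (intro sum.cong refl)
    subgoal for p by (cases "p = (u,v)") (auto intro!: sum.neutral)
    done
  also have "\<dots> = Poly_Mapping.lookup z (u,v) * Poly_Mapping.lookup t w"
    by (simp add: in_keys_iff)
  finally show ?thesis .
qed

lemma lookup_tens12: "Poly_Mapping.lookup (tens12 a z) (u,v,w) = Poly_Mapping.lookup a u * Poly_Mapping.lookup z (v,w)"
proof -
  have "Poly_Mapping.lookup (tens12 a z) (u,v,w) =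
    (\<Sum>u'\<in>Poly_Mapping.keys a. if u' = u then (\<Sum>p\<in>Poly_Mapping.keys z. if p = (v,w) then Poly_Mapping.lookup a u * Poly_Mapping.lookup z (v,w) else 0) else 0)"
    unfolding tens12_def lookup_sum lookup_single when_def
    by (intro sum.cong refl) auto
  also have "\<dots> = Poly_Mapping.lookup a u * Poly_Mapping.lookup z (v,w)"
    by (simp add: in_keys_iff)
  finally show ?thesis .
qed

lemma tens_add1: "tens (a + a') b = tens a b + tens a' b"
  by (rule poly_mapping_eqI) (auto simp: lookup_tens lookup_add algebra_simps)
lemma tens_add2: "tens a (b + b') = tens a b + tens a b'"
  by (rule poly_mapping_eqI) (auto simp: lookup_tens lookup_add algebra_simps)
lemma tens_single: "tens (Poly_Mapping.single u c) (Poly_Mapping.single v d) = Poly_Mapping.single (u,v) (c*d)"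
  by (rule poly_mapping_eqI) (auto simp: lookup_tens lookup_single when_def split: if_splits)
lemma tens21_add1: "tens21 (a + a') b = tens21 a b + tens21 a' b"
  by (rule poly_mapping_eqI) (auto simp: lookup_tens21 lookup_add algebra_simps)
lemma tens21_add2: "tens21 a (b + b') = tens21 a b + tens21 a b'"
  by (rule poly_mapping_eqI) (auto simp: lookup_tens21 lookup_add algebra_simps)
lemma tens21_single: "tens21 (Poly_Mapping.single (u,v) c) (Poly_Mapping.single w d) = Poly_Mapping.single (u,v,w) (c*d)"
  by (rule poly_mapping_eqI) (auto simp: lookup_tens21 lookup_single when_def split: if_splits)
lemma tens12_add1: "tens12 (a + a') b = tens12 a b + tens12 a' b"
  by (rule poly_mapping_eqI) (auto simp: lookup_tens12 lookup_add algebra_simps)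
lemma tens12_add2: "tens12 a (b + b') = tens12 a b + tens12 a b'"
  by (rule poly_mapping_eqI) (auto simp: lookup_tens12 lookup_add algebra_simps)
lemma tens12_single: "tens12 (Poly_Mapping.single u c) (Poly_Mapping.single (v,w) d) = Poly_Mapping.single (u,v,w) (c*d)"
  by (rule poly_mapping_eqI) (auto simp: lookup_tens12 lookup_single when_def split: if_splits)

lemma bilin_mult:
  fixes \<beta> :: "('a::monoid_add \<Rightarrow>\<^sub>0 complex) \<Rightarrow> ('b::monoid_add \<Rightarrow>\<^sub>0 complex) \<Rightarrow> ('c::monoid_add \<Rightarrow>\<^sub>0 complex)"
  assumes a1: "\<And>a a' b. \<beta> (a + a') b = \<beta> a b + \<beta> a' b"
    and a2: "\<And>a b b'. \<beta> a (b + b') = \<beta> a b + \<beta> a b'"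
    and s: "\<And>u c v d. \<beta> (Poly_Mapping.single u c) (Poly_Mapping.single v d) = Poly_Mapping.single (\<phi> u v) (c*d)"
    and p: "\<And>u u' v v'. \<phi> (u+u') (v+v') = \<phi> u v + \<phi> u' v'"
  shows "\<beta> (a*a') (b*b') = \<beta> a b * \<beta> a' b'"
proof -
  have z1: "\<beta> 0 b = 0" for b using a1[of 0 0 b] by simp
  have z2: "\<beta> a 0 = 0" for a using a2[of a 0 0] by simp
  show ?thesis
  proof (induction a rule: pm_induct)
    case zero then show ?case by (simp add: z1)
  next
    case (add x y) then show ?case by (simp add: distrib_right a1)
  next
    case (single u c)
    show ?case
    proof (induction a' rule: pm_induct)
      case zero then show ?case by (simp add: z1 z2)
    next
      case (add x y) then show ?case by (simp add: distrib_right distrib_left a1 a2)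
    next
      case (single u' c')
      show ?case
      proof (induction b rule: pm_induct)
        case zero then show ?case by (simp add: z1 z2)
      next
        case (add x y) then show ?case by (simp add: distrib_right distrib_left a1 a2)
      next
        case (single v d)
        show ?case
        proof (induction b' rule: pm_induct)
          case zero then show ?case by (simp add: z1 z2)
        next
          case (add x y) then show ?case by (simp add: distrib_right distrib_left a1 a2)
        next
          case (single v' d')
          then show ?case by (simp add: mult_single s p mult_ac)
        qed
      qed
    qed
  qed
qed

lemma tens_mult: "tens (a*a') (b*b') = tens a b * tens a' b'"
  by (rule bilin_mult[where \<phi>="\<lambda>u v. (u,v)"]) (simp_all add: tens_add1 tens_add2 tens_single)
lemma tens21_mult: "tens21 (a*a') (b*b') = tens21 a b * tens21 a' b'"
  by (rule bilin_mult[where \<phi>="\<lambda>p w. (fst p, snd p, w)"]) (auto simp: tens21_add1 tens21_add2 tens21_single)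
lemma tens12_mult: "tens12 (a*a') (b*b') = tens12 a b * tens12 a' b'"
  by (rule bilin_mult[where \<phi>="\<lambda>u p. (u, fst p, snd p)"]) (auto simp: tens12_add1 tens12_add2 tens12_single)

lemma tens_one: "tens 1 1 = 1"
  using tens_single[of 0 1 0 1] by (simp add: zero_prod_def[symmetric])

lemma tens_mono: "tens (mono u) (mono v) = mono (u,v)"
  by (simp add: mono_def tens_single)

lemma tlift_extW: "tlift h z = extW (\<lambda>c. Poly_Mapping.single 0 c) (\<lambda>p. h (mono (fst p)) (mono (snd p))) z"
  by (simp add: tlift_def extW_def smul_def)

interpretation S0: scal "\<lambda>c. Poly_Mapping.single (0::'k::monoid_add) c"
  by (rule scal_single0)

lemma tlift_add: "tlift h (z + w) = tlift h z + tlift h w"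
  by (simp add: tlift_extW S0.extW_add)
lemma tlift_smul: "tlift h (smul c z) = smul c (tlift h z)"
  unfolding tlift_extW by (subst S0.extW_smul) (simp add: smul_def)
lemma tlift_single: "tlift h (Poly_Mapping.single p c) = smul c (h (mono (fst p)) (mono (snd p)))"
  by (simp add: tlift_extW smul_def)
lemma tlift_mono: "tlift h (mono p) = h (mono (fst p)) (mono (snd p))"
  by (simp add: mono_def tlift_single)
lemma tlift_tens_mono: "tlift h (tens (mono u) (mono v)) = h (mono u) (mono v)"
  by (simp add: tens_mono tlift_mono)
lemma tlift_mult:
  assumes "\<And>u v u' v'. h (mono (u+u')) (mono (v+v')) = h (mono u) (mono v) * h (mono u') (mono v')"
  shows "tlift h (z * w) = tlift h z * tlift h w"
  unfolding tlift_extW by (rule S0.extW_mult) (simp add: assms)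
lemma tlift_one: "tlift h 1 = h 1 1"
  using tlift_mono[of h 0] by (simp add: zero_prod_def[symmetric])


primrec fW :: "(gen \<Rightarrow> 'b::monoid_mult) \<Rightarrow> gen word \<Rightarrow> 'b" where
  "fW \<phi> (Word l) = prod_list (map \<phi> l)"
primrec fWr :: "(gen \<Rightarrow> 'b::monoid_mult) \<Rightarrow> gen word \<Rightarrow> 'b" where
  "fWr \<phi> (Word l) = prod_list (rev (map \<phi> l))"

lemma fW_add: "fW \<phi> (u + v) = fW \<phi> u * fW \<phi> v"
  by (cases u; cases v) simp
lemma fWr_add: "fWr \<phi> (u + v) = fWr \<phi> v * fWr \<phi> u"
  by (cases u; cases v) simp
lemma fW_zero: "fW \<phi> 0 = 1" by (simp add: zero_word_def)
lemma fWr_zero: "fWr \<phi> 0 = 1" by (simp add: zero_word_def)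

primrec Dg :: "gen \<Rightarrow> F2" where
  "Dg (B s i) = tens (Bg s i) 1 + tens (Kg s) (Bg s i)"
| "Dg (K s) = tens (Kg s) (Kg s)"
primrec Sg :: "gen \<Rightarrow> F" where
  "Sg (B s i) = Bg s i * Kg (sneg s)"
| "Sg (K s) = Kg (sneg s)"
primrec eg :: "gen \<Rightarrow> complex" where
  "eg (B s i) = 0"
| "eg (K s) = 1"

definition Dm :: "F \<Rightarrow> F2" where "Dm = extW (\<lambda>c. Poly_Mapping.single 0 c) (fW Dg)"
definition Sm :: "F \<Rightarrow> F" where "Sm = extW (\<lambda>c. Poly_Mapping.single 0 c) (fWr Sg)"
definition em :: "F \<Rightarrow> complex" where "em = extW (\<lambda>c. c) (fW eg)"

lemma Dm_add: "Dm (x + y) = Dm x + Dm y" by (simp add: Dm_def S0.extW_add)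
lemma Dm_diff: "Dm (x - y) = Dm x - Dm y" by (simp add: Dm_def S0.extW_diff)
lemma Dm_zero: "Dm 0 = 0" unfolding Dm_def by (rule S0.extW_zero)
lemma Dm_mult: "Dm (x * y) = Dm x * Dm y" by (simp add: Dm_def S0.extW_mult fW_add)
lemma Dm_smul: "Dm (smul c x) = smul c (Dm x)" unfolding Dm_def by (subst S0.extW_smul) (simp add: smul_def)
lemma Dm_one: "Dm 1 = 1" by (simp add: Dm_def S0.extW_one fW_zero)
lemma Dm_X: "Dm (X g) = Dg g" by (simp add: Dm_def X_def mono_def)

lemma Sm_add: "Sm (x + y) = Sm x + Sm y" by (simp add: Sm_def S0.extW_add)
lemma Sm_diff: "Sm (x - y) = Sm x - Sm y" by (simp add: Sm_def S0.extW_diff)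
lemma Sm_zero: "Sm 0 = 0" unfolding Sm_def by (rule S0.extW_zero)
lemma Sm_mult: "Sm (x * y) = Sm y * Sm x" by (simp add: Sm_def S0.extW_antimult fWr_add)
lemma Sm_smul: "Sm (smul c x) = smul c (Sm x)" unfolding Sm_def by (subst S0.extW_smul) (simp add: smul_def)
lemma Sm_one: "Sm 1 = 1" by (simp add: Sm_def S0.extW_one fWr_zero)
lemma Sm_X: "Sm (X g) = Sg g" by (simp add: Sm_def X_def mono_def)

lemma em_add: "em (x + y) = em x + em y" by (simp add: em_def scal.extW_add[OF scal_id])
lemma em_diff: "em (x - y) = em x - em y" by (simp add: em_def scal.extW_diff[OF scal_id])
lemma em_zero: "em 0 = 0" unfolding em_def by (rule scal.extW_zero[OF scal_id])
lemma em_mult: "em (x * y) = em x * em y" by (simp add: em_def scal.extW_mult[OF scal_id] fW_add)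
lemma em_smul: "em (smul c x) = c * em x" by (simp add: em_def scal.extW_smul[OF scal_id])
lemma em_one: "em 1 = 1" by (simp add: em_def scal.extW_one[OF scal_id] fW_zero)
lemma em_X: "em (X g) = eg g" by (simp add: em_def X_def mono_def scal.extW_single[OF scal_id])

lemma Bg_X: "Bg s i = X (B s i)" by (simp add: Bg_def)
lemma Kg_X: "Kg s = X (K s)" by (simp add: Kg_def)

lemma Dm_Bg: "Dm (Bg s i) = tens (Bg s i) 1 + tens (Kg s) (Bg s i)"
proof - have "Dm (Bg s i) = Dg (B s i)" unfolding Bg_def by (rule Dm_X) then show ?thesis by (simp only: Dg.simps) qed
lemma Dm_Kg: "Dm (Kg s) = tens (Kg s) (Kg s)"
proof - have "Dm (Kg s) = Dg (K s)" unfolding Kg_def by (rule Dm_X) then show ?thesis by (simp only: Dg.simps) qed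
lemma Sm_Bg: "Sm (Bg s i) = Bg s i * Kg (sneg s)"
proof - have "Sm (Bg s i) = Sg (B s i)" unfolding Bg_def by (rule Sm_X) then show ?thesis by (simp only: Sg.simps) qed
lemma Sm_Kg: "Sm (Kg s) = Kg (sneg s)"
proof - have "Sm (Kg s) = Sg (K s)" unfolding Kg_def by (rule Sm_X) then show ?thesis by (simp only: Sg.simps) qed
lemma em_Bg: "em (Bg s i) = 0" unfolding Bg_def by (simp only: em_X eg.simps)
lemma em_Kg: "em (Kg s) = 1" unfolding Kg_def by (simp only: em_X eg.simps)

lemma F_induct:
  fixes P :: "F \<Rightarrow> bool"
  assumes "P 0" "P 1" "\<And>g. P (X g)" "\<And>x y. P x \<Longrightarrow> P y \<Longrightarrow> P (x + y)"
    "\<And>c x. P x \<Longrightarrow> P (smul c x)" "\<And>x y. P x \<Longrightarrow> P y \<Longrightarrow> P (x * y)"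
  shows "P x"
proof (induction x rule: pm_induct)
  case zero then show ?case by (rule assms)
next
  case (add x y) then show ?case by (rule assms)
next
  case (single w c)
  have m: "P (mono (Word l))" for l
  proof (induction l)
    case Nil then show ?case using assms(2) by (simp add: zero_word_def[symmetric])
  next
    case (Cons g l)
    have "mono (Word (g # l)) = X g * mono (Word l)"
      by (simp add: X_def mono_add[symmetric])
    then show ?case using Cons assms(3,6) by simp
  qed
  have "Poly_Mapping.single w c = smul c (mono w)" by (simp add: mono_def smul_single)
  then show ?case using m assms(5) by (cases w) simp
qed



lemma idl_sym: "x - y \<in> ideal_gen R \<Longrightarrow> y - (x::'a::ring_1) \<in> ideal_gen R"
  using ideal_neg[of "x - y" R] by simp
lemma idl_trans: "x - y \<in> ideal_gen R \<Longrightarrow> y - z \<in> ideal_gen R \<Longrightarrow> x - (z::'a::ring_1) \<in> ideal_gen R"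
  using ideal_gen.add[of "x - y" R "y - z"] by simp
lemma idl_add: "x - x' \<in> ideal_gen R \<Longrightarrow> y - y' \<in> ideal_gen R \<Longrightarrow> (x + y) - (x' + (y'::'a::ring_1)) \<in> ideal_gen R"
  using ideal_gen.add[of "x - x'" R "y - y'"] by (simp add: algebra_simps)
lemma idl_diff: "x - x' \<in> ideal_gen R \<Longrightarrow> y - y' \<in> ideal_gen R \<Longrightarrow> (x - y) - (x' - (y'::'a::ring_1)) \<in> ideal_gen R"
  using ideal_diff[of "x - x'" R "y - y'"] by (simp add: algebra_simps)
lemma idl_uminus: "x - x' \<in> ideal_gen R \<Longrightarrow> (- x) - (- (x'::'a::ring_1)) \<in> ideal_gen R"
  using ideal_neg[of "x - x'" R] by (simp add: algebra_simps)
lemma idl_mult: "x - x' \<in> ideal_gen R \<Longrightarrow> y - y' \<in> ideal_gen R \<Longrightarrow> (x * y) - (x' * (y'::'a::ring_1)) \<in> ideal_gen R"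
proof -
  assume "x - x' \<in> ideal_gen R" "y - y' \<in> ideal_gen R"
  then have "(x - x') * y + x' * (y - y') \<in> ideal_gen R"
    by (intro ideal_gen.add ideal_gen.rmult ideal_gen.lmult)
  then show ?thesis by (simp add: algebra_simps)
qed

lemma I1_zero[simp]: "0 \<in> I1" by (simp add: I1_def ideal_gen.zero)

quotient_type P1 = F / "\<lambda>x y. x - y \<in> I1"
proof (rule equivpI)
  show "reflp (\<lambda>x y. x - y \<in> I1)" by (rule reflpI) simp
  show "symp (\<lambda>x y. x - y \<in> I1)"
    unfolding I1_def by (rule sympI) (rule idl_sym)
  show "transp (\<lambda>x y. x - y \<in> I1)"
    unfolding I1_def by (rule transpI) (rule idl_trans)
qed

instantiation P1 :: "{ring, monoid_mult}"
begin
lift_definition zero_P1 :: P1 is "0" .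
lift_definition one_P1 :: P1 is "1" .
lift_definition plus_P1 :: "P1 \<Rightarrow> P1 \<Rightarrow> P1" is "(+)"
  unfolding I1_def by (rule idl_add)
lift_definition uminus_P1 :: "P1 \<Rightarrow> P1" is "uminus"
  unfolding I1_def by (rule idl_uminus)
lift_definition minus_P1 :: "P1 \<Rightarrow> P1 \<Rightarrow> P1" is "(-)"
  unfolding I1_def by (rule idl_diff)
lift_definition times_P1 :: "P1 \<Rightarrow> P1 \<Rightarrow> P1" is "(*)"
  unfolding I1_def by (rule idl_mult)
instance
  apply intro_classes
  apply (transfer; simp add: algebra_simps; fail)+
  done
end

lemma abs_P1_eq_iff: "abs_P1 x = abs_P1 y \<longleftrightarrow> x - y \<in> I1"
  by (simp add: P1.abs_eq_iff)
lemma abs_P1_zero_iff: "abs_P1 x = 0 \<longleftrightarrow> x \<in> I1"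
  by (metis abs_P1_eq_iff diff_zero zero_P1.abs_eq)
lemma abs_P1_add: "abs_P1 (x + y) = abs_P1 x + abs_P1 y" by (simp add: plus_P1.abs_eq)
lemma abs_P1_diff: "abs_P1 (x - y) = abs_P1 x - abs_P1 y" by (simp add: minus_P1.abs_eq)
lemma abs_P1_mult: "abs_P1 (x * y) = abs_P1 x * abs_P1 y" by (simp add: times_P1.abs_eq)
lemma abs_P1_one: "abs_P1 1 = 1" by (simp add: one_P1.abs_eq)
lemma abs_P1_zero: "abs_P1 0 = 0" by (simp add: zero_P1.abs_eq)
lemma abs_P1_uminus: "abs_P1 (- x) = - abs_P1 x" by (simp add: uminus_P1.abs_eq)

lemma I2_zero[simp]: "0 \<in> I2" by (simp add: I2_def ideal_gen.zero)

quotient_type P2 = F2 / "\<lambda>x y. x - y \<in> I2"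
proof (rule equivpI)
  show "reflp (\<lambda>x y. x - y \<in> I2)" by (rule reflpI) simp
  show "symp (\<lambda>x y. x - y \<in> I2)"
    unfolding I2_def by (rule sympI) (rule idl_sym)
  show "transp (\<lambda>x y. x - y \<in> I2)"
    unfolding I2_def by (rule transpI) (rule idl_trans)
qed

instantiation P2 :: "{ring, monoid_mult}"
begin
lift_definition zero_P2 :: P2 is "0" .
lift_definition one_P2 :: P2 is "1" .
lift_definition plus_P2 :: "P2 \<Rightarrow> P2 \<Rightarrow> P2" is "(+)"
  unfolding I2_def by (rule idl_add)
lift_definition uminus_P2 :: "P2 \<Rightarrow> P2" is "uminus"
  unfolding I2_def by (rule idl_uminus)
lift_definition minus_P2 :: "P2 \<Rightarrow> P2 \<Rightarrow> P2" is "(-)"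
  unfolding I2_def by (rule idl_diff)
lift_definition times_P2 :: "P2 \<Rightarrow> P2 \<Rightarrow> P2" is "(*)"
  unfolding I2_def by (rule idl_mult)
instance
  apply intro_classes
  apply (transfer; simp add: algebra_simps; fail)+
  done
end

lemma abs_P2_eq_iff: "abs_P2 x = abs_P2 y \<longleftrightarrow> x - y \<in> I2"
  by (simp add: P2.abs_eq_iff)
lemma abs_P2_zero_iff: "abs_P2 x = 0 \<longleftrightarrow> x \<in> I2"
  by (metis abs_P2_eq_iff diff_zero zero_P2.abs_eq)
lemma abs_P2_add: "abs_P2 (x + y) = abs_P2 x + abs_P2 y" by (simp add: plus_P2.abs_eq)
lemma abs_P2_diff: "abs_P2 (x - y) = abs_P2 x - abs_P2 y" by (simp add: minus_P2.abs_eq)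
lemma abs_P2_mult: "abs_P2 (x * y) = abs_P2 x * abs_P2 y" by (simp add: times_P2.abs_eq)
lemma abs_P2_one: "abs_P2 1 = 1" by (simp add: one_P2.abs_eq)
lemma abs_P2_zero: "abs_P2 0 = 0" by (simp add: zero_P2.abs_eq)
lemma abs_P2_uminus: "abs_P2 (- x) = - abs_P2 x" by (simp add: uminus_P2.abs_eq)


definition cf :: "sgn \<Rightarrow> sgn \<Rightarrow> nat \<Rightarrow> nat \<Rightarrow> 'a::{ring,monoid_mult}" where
  "cf ep eta j l = (if j = l \<and> ep \<noteq> eta then (if ep = Pl then 1 + 1 else - (1 + 1)) else 0)"

lemma cf_comm: "cf ep eta j l * x = x * (cf ep eta j l :: 'a::{ring,monoid_mult})"
  by (cases "j = l \<and> ep \<noteq> eta"; cases ep) (simp_all add: cf_def algebra_simps)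

lemma assoc_rule: "x * y = w \<Longrightarrow> x * (y * z) = w * (z::'a::{ring,monoid_mult})"
  by (simp add: mult.assoc[symmetric])

lemma A1:
  fixes b b' :: "sgn \<Rightarrow> nat \<Rightarrow> 'a::{ring,monoid_mult}" and k k' :: "sgn \<Rightarrow> 'a"
  assumes r1: "\<And>xi eta ep i j l. comm (acomm (b xi i) (b eta j)) (b ep l) = cf ep eta j l * b xi i + cf ep xi i l * b eta j"
    and r2: "k Pl * k Mi = 1" and r3: "k Mi * k Pl = 1" and r4: "\<And>s t i. b t i * k s = - (k s * b t i)"
    and r1': "\<And>xi eta ep i j l. comm (acomm (b' xi i) (b' eta j)) (b' ep l) = cf ep eta j l * b' xi i + cf ep xi i l * b' eta j"
    and r2': "k' Pl * k' Mi = 1" and r3': "k' Mi * k' Pl = 1" and r4': "\<And>s t i. b' t i * k' s = - (k' s * b' t i)"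
    and c1: "\<And>s i t j. b' t j * b s i = b s i * b' t j"
    and c2: "\<And>s i t. k' t * b s i = b s i * k' t"
    and c3: "\<And>s t i. b' t i * k s = k s * b' t i"
    and c4: "\<And>s t. k' t * k s = k s * k' t"
  shows "comm (acomm (b xi i + k xi * b' xi i) (b eta j + k eta * b' eta j)) (b ep l + k ep * b' ep l)
     = cf ep eta j l * (b xi i + k xi * b' xi i) + cf ep xi i l * (b eta j + k eta * b' eta j)"
proof -
  note R = r2 r3 r4 c1 c2 c3 c4 r2' r3' r4'
    assoc_rule[OF r2] assoc_rule[OF r3] assoc_rule[OF r4] assoc_rule[OF c1] assoc_rule[OF c2]
    assoc_rule[OF c3] assoc_rule[OF c4] assoc_rule[OF r2'] assoc_rule[OF r3'] assoc_rule[OF r4']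
  have kc: "k s * k t = k t * k s" for s t by (cases s; cases t) (simp_all add: r2 r3)
  define X where "X = acomm (b xi i) (b eta j)"
  define X' where "X' = acomm (b' xi i) (b' eta j)"
  have s1: "acomm (b xi i + k xi * b' xi i) (b eta j + k eta * b' eta j) = X + k xi * (k eta * X')"
    unfolding X_def X'_def acomm_def
    by (simp add: algebra_simps R assoc_rule[OF kc[of eta xi]])
  have s2: "comm (X + k xi * (k eta * X')) (b ep l + k ep * b' ep l) = comm X (b ep l) + k xi * (k eta * (k ep * comm X' (b' ep l)))"
    unfolding X_def X'_def acomm_def comm_def
    by (simp add: algebra_simps R assoc_rule[OF kc[of ep xi]] assoc_rule[OF kc[of ep eta]] kc[of ep xi] kc[of ep eta])
  have "comm (acomm (b xi i + k xi * b' xi i) (b eta j + k eta * b' eta j)) (b ep l + k ep * b' ep l)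
     = comm X (b ep l) + k xi * (k eta * (k ep * comm X' (b' ep l)))" using s1 s2 by simp
  also have "\<dots> = cf ep eta j l * b xi i + cf ep xi i l * b eta j
      + k xi * (k eta * (k ep * (cf ep eta j l * b' xi i + cf ep xi i l * b' eta j)))"
    by (simp add: X_def X'_def r1 r1')
  also have "\<dots> = cf ep eta j l * (b xi i + k xi * b' xi i) + cf ep xi i l * (b eta j + k eta * b' eta j)"
    by (cases xi; cases eta; cases ep) (auto simp: cf_def algebra_simps R)
  finally show ?thesis .
qed


lemma A1b:
  fixes b b' :: "sgn \<Rightarrow> nat \<Rightarrow> 'a::{ring,monoid_mult}" and k k' :: "sgn \<Rightarrow> 'a"
  assumes r2: "k Pl * k Mi = 1" and r3: "k Mi * k Pl = 1" and r4: "\<And>s t i. b t i * k s = - (k s * b t i)"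
    and r2': "k' Pl * k' Mi = 1" and r3': "k' Mi * k' Pl = 1" and r4': "\<And>s t i. b' t i * k' s = - (k' s * b' t i)"
    and c1: "\<And>s i t j. b' t j * b s i = b s i * b' t j"
    and c2: "\<And>s i t. k' t * b s i = b s i * k' t"
    and c3: "\<And>s t i. b' t i * k s = k s * b' t i"
    and c4: "\<And>s t. k' t * k s = k s * k' t"
  shows "(k Pl * k' Pl) * (k Mi * k' Mi) = 1" "(k Mi * k' Mi) * (k Pl * k' Pl) = 1"
    "acomm (k s * k' s) (b t i + k t * b' t i) = 0"
proof -
  note R = r2 r3 r4 c1 c2 c3 c4 r2' r3' r4'
    assoc_rule[OF r2] assoc_rule[OF r3] assoc_rule[OF r4] assoc_rule[OF c1] assoc_rule[OF c2]
    assoc_rule[OF c3] assoc_rule[OF c4] assoc_rule[OF r2'] assoc_rule[OF r3'] assoc_rule[OF r4']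
  show "(k Pl * k' Pl) * (k Mi * k' Mi) = 1" "(k Mi * k' Mi) * (k Pl * k' Pl) = 1"
    by (simp_all add: algebra_simps R)
  show "acomm (k s * k' s) (b t i + k t * b' t i) = 0"
    by (cases s; cases t) (simp_all add: acomm_def algebra_simps R)
qed

lemma A2:
  fixes b :: "sgn \<Rightarrow> nat \<Rightarrow> 'a::{ring,monoid_mult}" and k :: "sgn \<Rightarrow> 'a"
  assumes r1: "\<And>xi eta ep i j l. comm (acomm (b xi i) (b eta j)) (b ep l) = cf ep eta j l * b xi i + cf ep xi i l * b eta j"
    and r2: "k Pl * k Mi = 1" and r3: "k Mi * k Pl = 1" and r4: "\<And>s t i. b t i * k s = - (k s * b t i)"
  shows "comm (b ep l * k (sneg ep)) (acomm (b xi i * k (sneg xi)) (b eta j * k (sneg eta)))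
     = cf ep eta j l * (b xi i * k (sneg xi)) + cf ep xi i l * (b eta j * k (sneg eta))"
    "acomm (b t i * k (sneg t)) (k (sneg s)) = 0"
proof -
  note R = r2 r3 r4 assoc_rule[OF r2] assoc_rule[OF r3] assoc_rule[OF r4]
  have "comm (b ep l * k (sneg ep)) (acomm (b xi i * k (sneg xi)) (b eta j * k (sneg eta)))
     = - (k (sneg xi) * (k (sneg eta) * (k (sneg ep) * comm (acomm (b xi i) (b eta j)) (b ep l))))"
    by (cases xi; cases eta; cases ep) (simp_all add: comm_def acomm_def algebra_simps R)
  also have "\<dots> = - (k (sneg xi) * (k (sneg eta) * (k (sneg ep) * (cf ep eta j l * b xi i + cf ep xi i l * b eta j))))"
    by (simp add: r1)
  also have "\<dots> = cf ep eta j l * (b xi i * k (sneg xi)) + cf ep xi i l * (b eta j * k (sneg eta))"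
    by (cases xi; cases eta; cases ep) (auto simp: cf_def algebra_simps R)
  finally show "comm (b ep l * k (sneg ep)) (acomm (b xi i * k (sneg xi)) (b eta j * k (sneg eta)))
     = cf ep eta j l * (b xi i * k (sneg xi)) + cf ep xi i l * (b eta j * k (sneg eta))" .
  show "acomm (b t i * k (sneg t)) (k (sneg s)) = 0"
    by (cases s; cases t) (simp_all add: acomm_def algebra_simps R)
qed


lemma coef_eq: "(sval ep - sval eta) * (if j = l then 1 else 0) = (if j = l \<and> ep \<noteq> eta then (if ep = Pl then 1 + 1 else - (1 + 1)) else (0::complex))"
  by (cases ep; cases eta) auto
lemma single0_cf: "Poly_Mapping.single 0 ((sval ep - sval eta) * (if j = l then 1 else 0)) = (cf ep eta j l :: 'k::monoid_add \<Rightarrow>\<^sub>0 complex)"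
  unfolding coef_eq cf_def by (simp only: if_distrib[of "Poly_Mapping.single 0"] single_add single_uminus single_one single_zero)

lemma smul_coef: "smul ((sval ep - sval eta) * (if j = l then 1 else 0)) x = cf ep eta j l * (x :: 'k::monoid_add \<Rightarrow>\<^sub>0 complex)"
  by (simp add: smul_def single0_cf)

locale rhom =
  fixes \<phi> :: "F \<Rightarrow> 'a::{ring,monoid_mult}"
  assumes hadd: "\<phi> (x + y) = \<phi> x + \<phi> y" and hmult: "\<phi> (x * y) = \<phi> x * \<phi> y" and hone: "\<phi> 1 = 1"
begin
lemma hzero: "\<phi> 0 = 0" using hadd[of 0 0] by simp
lemma huminus: "\<phi> (- x) = - \<phi> x" using hadd[of x "-x"] hzero by (metis add.commute eq_neg_iff_add_eq_0 right_minus)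
lemma hdiff: "\<phi> (x - y) = \<phi> x - \<phi> y" using hadd[of x "-y"] by (simp add: huminus)
lemma hcomm: "\<phi> (comm x y) = comm (\<phi> x) (\<phi> y)" by (simp add: comm_def hdiff hmult)
lemma hacomm: "\<phi> (acomm x y) = acomm (\<phi> x) (\<phi> y)" by (simp add: acomm_def hadd hmult)
lemma hcf: "\<phi> (cf ep eta j l) = cf ep eta j l"
  by (simp only: cf_def if_distrib[of \<phi>] hzero hone hadd huminus)

lemma kills:
  assumes r1: "\<And>xi eta ep i j l. comm (acomm (\<phi> (Bg xi i)) (\<phi> (Bg eta j))) (\<phi> (Bg ep l)) = cf ep eta j l * \<phi> (Bg xi i) + cf ep xi i l * \<phi> (Bg eta j)"
    and r2: "\<phi> (Kg Pl) * \<phi> (Kg Mi) = 1" and r3: "\<phi> (Kg Mi) * \<phi> (Kg Pl) = 1"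
    and r4: "\<And>s t i. acomm (\<phi> (Kg s)) (\<phi> (Bg t i)) = 0"
    and r: "r \<in> Rel"
  shows "\<phi> r = 0"
  using r unfolding Rel_def
  by (auto simp: hdiff hadd hmult hcomm hacomm hone smul_coef hcf r1 r2 r3 r4)

lemma rels:
  assumes k: "\<And>r. r \<in> Rel \<Longrightarrow> \<phi> r = 0"
  shows "comm (acomm (\<phi> (Bg xi i)) (\<phi> (Bg eta j))) (\<phi> (Bg ep l)) = cf ep eta j l * \<phi> (Bg xi i) + cf ep xi i l * \<phi> (Bg eta j)"
    and "\<phi> (Kg Pl) * \<phi> (Kg Mi) = 1" and "\<phi> (Kg Mi) * \<phi> (Kg Pl) = 1"
    and "\<phi> (Bg t i) * \<phi> (Kg s) = - (\<phi> (Kg s) * \<phi> (Bg t i))"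
proof -
  have "\<phi> (comm (acomm (Bg xi i) (Bg eta j)) (Bg ep l)
        - (smul ((sval ep - sval eta) * (if j = l then 1 else 0)) (Bg xi i)
           + smul ((sval ep - sval xi) * (if i = l then 1 else 0)) (Bg eta j))) = 0"
    by (rule k) (unfold Rel_def, blast)
  then show "comm (acomm (\<phi> (Bg xi i)) (\<phi> (Bg eta j))) (\<phi> (Bg ep l)) = cf ep eta j l * \<phi> (Bg xi i) + cf ep xi i l * \<phi> (Bg eta j)"
    by (simp add: hdiff hadd hmult hcomm hacomm smul_coef hcf)
  have "\<phi> (Kg Pl * Kg Mi - 1) = 0" by (rule k) (simp add: Rel_def)
  then show "\<phi> (Kg Pl) * \<phi> (Kg Mi) = 1" by (simp add: hdiff hmult hone)
  have "\<phi> (Kg Mi * Kg Pl - 1) = 0" by (rule k) (simp add: Rel_def)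
  then show "\<phi> (Kg Mi) * \<phi> (Kg Pl) = 1" by (simp add: hdiff hmult hone)
  have "\<phi> (acomm (Kg s) (Bg t i)) = 0" by (rule k) (unfold Rel_def, blast)
  then show "\<phi> (Bg t i) * \<phi> (Kg s) = - (\<phi> (Kg s) * \<phi> (Bg t i))"
  proof -
    assume "\<phi> (acomm (Kg s) (Bg t i)) = 0"
    then have "\<phi> (Kg s) * \<phi> (Bg t i) + \<phi> (Bg t i) * \<phi> (Kg s) = 0" by (simp add: hadd hmult acomm_def)
    then show ?thesis by (simp only: eq_neg_iff_add_eq_0 add.commute[of "\<phi> (Bg t i) * \<phi> (Kg s)"])
  qed
qed
end

locale arhom =
  fixes \<phi> :: "F \<Rightarrow> 'a::{ring,monoid_mult}"
  assumes hadd: "\<phi> (x + y) = \<phi> x + \<phi> y" and hmult: "\<phi> (x * y) = \<phi> y * \<phi> x" and hone: "\<phi> 1 = 1"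
begin
lemma hzero: "\<phi> 0 = 0" using hadd[of 0 0] by simp
lemma huminus: "\<phi> (- x) = - \<phi> x" using hadd[of x "-x"] hzero by (metis add.commute eq_neg_iff_add_eq_0 right_minus)
lemma hdiff: "\<phi> (x - y) = \<phi> x - \<phi> y" using hadd[of x "-y"] by (simp add: huminus)
lemma hcomm: "\<phi> (comm x y) = comm (\<phi> y) (\<phi> x)" by (simp add: comm_def hdiff hmult)
lemma hacomm: "\<phi> (acomm x y) = acomm (\<phi> x) (\<phi> y)" by (simp add: acomm_def hadd hmult add.commute)
lemma hcf: "\<phi> (cf ep eta j l) = cf ep eta j l"
  by (simp only: cf_def if_distrib[of \<phi>] hzero hone hadd huminus)

lemma kills:
  assumes r1: "\<And>xi eta ep i j l. comm (\<phi> (Bg ep l)) (acomm (\<phi> (Bg xi i)) (\<phi> (Bg eta j))) = cf ep eta j l * \<phi> (Bg xi i) + cf ep xi i l * \<phi> (Bg eta j)"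
    and r2: "\<phi> (Kg Pl) * \<phi> (Kg Mi) = 1" and r3: "\<phi> (Kg Mi) * \<phi> (Kg Pl) = 1"
    and r4: "\<And>s t i. acomm (\<phi> (Kg s)) (\<phi> (Bg t i)) = 0"
    and r: "r \<in> Rel"
  shows "\<phi> r = 0"
  using r unfolding Rel_def
  by (auto simp: hdiff hadd hmult hcomm hacomm hone smul_coef hcf r1 r2 r3 r4 cf_comm)
end


lemma rhom_P1: "rhom abs_P1"
  by unfold_locales (simp_all add: abs_P1_add abs_P1_mult abs_P1_one)
lemma P1_kills: "r \<in> Rel \<Longrightarrow> abs_P1 r = 0"
  by (simp add: abs_P1_zero_iff I1_def ideal_gen.gen)

definition Lq :: "F \<Rightarrow> P2" where "Lq x = abs_P2 (tens x 1)"
definition Rq :: "F \<Rightarrow> P2" where "Rq x = abs_P2 (tens 1 x)"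

lemma rhom_Lq: "rhom Lq"
proof
  show "Lq (x + y) = Lq x + Lq y" for x y by (simp add: Lq_def tens_add1 abs_P2_add)
  show "Lq (x * y) = Lq x * Lq y" for x y using tens_mult[of x y 1 1] by (simp add: Lq_def abs_P2_mult)
  show "Lq 1 = 1" by (simp add: Lq_def tens_one abs_P2_one)
qed
lemma rhom_Rq: "rhom Rq"
proof
  show "Rq (x + y) = Rq x + Rq y" for x y by (simp add: Rq_def tens_add2 abs_P2_add)
  show "Rq (x * y) = Rq x * Rq y" for x y using tens_mult[of 1 1 x y] by (simp add: Rq_def abs_P2_mult)
  show "Rq 1 = 1" by (simp add: Rq_def tens_one abs_P2_one)
qed
lemma Lq_kills: "r \<in> Rel \<Longrightarrow> Lq r = 0"
  by (auto simp: Lq_def abs_P2_zero_iff I2_def intro: ideal_gen.gen)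
lemma Rq_kills: "r \<in> Rel \<Longrightarrow> Rq r = 0"
  by (auto simp: Rq_def abs_P2_zero_iff I2_def intro: ideal_gen.gen)
lemma LR: "Lq x * Rq y = abs_P2 (tens x y)"
  using tens_mult[of x 1 1 y] by (simp add: Lq_def Rq_def abs_P2_mult)
lemma RL: "Rq y * Lq x = Lq x * Rq y"
  using tens_mult[of 1 x y 1] by (simp add: Lq_def Rq_def abs_P2_mult LR[unfolded Lq_def Rq_def])

definition Psi :: "F \<Rightarrow> P2" where "Psi x = abs_P2 (Dm x)"
lemma rhom_Psi: "rhom Psi"
  by unfold_locales (simp_all add: Psi_def Dm_add Dm_mult Dm_one abs_P2_add abs_P2_mult abs_P2_one)
lemma Psi_Bg: "Psi (Bg s i) = Lq (Bg s i) + Lq (Kg s) * Rq (Bg s i)"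
  by (simp add: Psi_def Dm_Bg abs_P2_add LR) (simp add: Lq_def)
lemma Psi_Kg: "Psi (Kg s) = Lq (Kg s) * Rq (Kg s)"
  by (simp add: Psi_def Dm_Kg LR)

lemma Dm_Rel: "r \<in> Rel \<Longrightarrow> Dm r \<in> I2"
proof -
  assume r: "r \<in> Rel"
  interpret L: rhom Lq by (rule rhom_Lq)
  interpret R: rhom Rq by (rule rhom_Rq)
  interpret P: rhom Psi by (rule rhom_Psi)
  note Lr = L.rels[OF Lq_kills] and Rr = R.rels[OF Rq_kills]
  have "Psi r = 0"
  proof (rule P.kills[OF _ _ _ _ r])
    show "comm (acomm (Psi (Bg xi i)) (Psi (Bg eta j))) (Psi (Bg ep l)) = cf ep eta j l * Psi (Bg xi i) + cf ep xi i l * Psi (Bg eta j)" for xi eta ep i j l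
      unfolding Psi_Bg by (rule A1[where b="\<lambda>s i. Lq (Bg s i)" and k="\<lambda>s. Lq (Kg s)" and b'="\<lambda>s i. Rq (Bg s i)" and k'="\<lambda>s. Rq (Kg s)"])
        (simp_all add: Lr Rr RL)
    show "Psi (Kg Pl) * Psi (Kg Mi) = 1" "Psi (Kg Mi) * Psi (Kg Pl) = 1"
      unfolding Psi_Kg by (rule A1b[where b="\<lambda>s i. Lq (Bg s i)" and k="\<lambda>s. Lq (Kg s)" and b'="\<lambda>s i. Rq (Bg s i)" and k'="\<lambda>s. Rq (Kg s)"];
         simp add: Lr Rr RL)+
    show "acomm (Psi (Kg s)) (Psi (Bg t i)) = 0" for s t i
      unfolding Psi_Kg Psi_Bg by (rule A1b[where b="\<lambda>s i. Lq (Bg s i)" and k="\<lambda>s. Lq (Kg s)" and b'="\<lambda>s i. Rq (Bg s i)" and k'="\<lambda>s. Rq (Kg s)"])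
        (simp_all add: Lr Rr RL)
  qed
  then show ?thesis by (simp add: Psi_def abs_P2_zero_iff)
qed

definition Phi :: "F \<Rightarrow> P1" where "Phi x = abs_P1 (Sm x)"
lemma arhom_Phi: "arhom Phi"
  by unfold_locales (simp_all add: Phi_def Sm_add Sm_mult Sm_one abs_P1_add abs_P1_mult abs_P1_one)

lemma Sm_Rel: "r \<in> Rel \<Longrightarrow> Sm r \<in> I1"
proof -
  assume r: "r \<in> Rel"
  interpret Q: rhom abs_P1 by (rule rhom_P1)
  interpret P: arhom Phi by (rule arhom_Phi)
  note Qr = Q.rels[OF P1_kills]
  have PB: "Phi (Bg s i) = abs_P1 (Bg s i) * abs_P1 (Kg (sneg s))" for s i
    by (simp add: Phi_def Sm_Bg abs_P1_mult)
  have PK: "Phi (Kg s) = abs_P1 (Kg (sneg s))" for s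
    by (simp add: Phi_def Sm_Kg)
  have "Phi r = 0"
  proof (rule P.kills[OF _ _ _ _ r])
    show "comm (Phi (Bg ep l)) (acomm (Phi (Bg xi i)) (Phi (Bg eta j))) = cf ep eta j l * Phi (Bg xi i) + cf ep xi i l * Phi (Bg eta j)" for xi eta ep i j l
      unfolding PB by (rule A2(1)[where b="\<lambda>s i. abs_P1 (Bg s i)" and k="\<lambda>s. abs_P1 (Kg s)"]) (simp_all add: Qr)
    show "Phi (Kg Pl) * Phi (Kg Mi) = 1" "Phi (Kg Mi) * Phi (Kg Pl) = 1"
      by (simp_all add: PK Qr)
    show "acomm (Phi (Kg s)) (Phi (Bg t i)) = 0" for s t i
    proof -
      have "acomm (abs_P1 (Bg t i) * abs_P1 (Kg (sneg t))) (abs_P1 (Kg (sneg s))) = 0"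
        by (rule A2(2)[where b="\<lambda>s i. abs_P1 (Bg s i)" and k="\<lambda>s. abs_P1 (Kg s)"]) (simp_all add: Qr)
      then show ?thesis by (simp add: PK PB acomm_def add.commute)
    qed
  qed
  then show ?thesis by (simp add: Phi_def abs_P1_zero_iff)
qed

lemma rhom_em: "rhom em"
  by unfold_locales (simp_all add: em_add em_mult em_one)

lemma em_Rel: "r \<in> Rel \<Longrightarrow> em r = 0"
proof -
  assume r: "r \<in> Rel"
  interpret E: rhom em by (rule rhom_em)
  show ?thesis
    by (rule E.kills[OF _ _ _ _ r]) (simp_all add: em_Bg em_Kg comm_def acomm_def)
qed

lemma Dm_I1: "x \<in> I1 \<Longrightarrow> Dm x \<in> I2"
  unfolding I1_def
proof (induction rule: ideal_gen.induct)
  case zero then show ?case by (simp add: Dm_zero)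
next
  case (gen r) then show ?case by (rule Dm_Rel)
next
  case (add x y) then show ?case by (simp add: Dm_add I2_def ideal_gen.add)
next
  case (lmult x a) then show ?case by (simp add: Dm_mult I2_def ideal_gen.lmult)
next
  case (rmult x a) then show ?case by (simp add: Dm_mult I2_def ideal_gen.rmult)
qed

lemma Sm_I1: "x \<in> I1 \<Longrightarrow> Sm x \<in> I1"
  unfolding I1_def
proof (induction rule: ideal_gen.induct)
  case zero then show ?case by (simp add: Sm_zero ideal_gen.zero)
next
  case (gen r) then show ?case using Sm_Rel[of r] by (simp add: I1_def)
next
  case (add x y) then show ?case by (simp add: Sm_add I1_def ideal_gen.add)
next
  case (lmult x a) then show ?case by (simp add: Sm_mult I1_def ideal_gen.rmult)
next
  case (rmult x a) then show ?case by (simp add: Sm_mult I1_def ideal_gen.lmult)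
qed

lemma em_I1: "x \<in> I1 \<Longrightarrow> em x = 0"
  unfolding I1_def
proof (induction rule: ideal_gen.induct)
  case zero then show ?case by (simp add: em_zero)
next
  case (gen r) then show ?case by (rule em_Rel)
next
  case (add x y) then show ?case by (simp add: em_add)
next
  case (lmult x a) then show ?case by (simp add: em_mult)
next
  case (rmult x a) then show ?case by (simp add: em_mult)
qed


lemma uniq_hom:
  fixes D' D :: "F \<Rightarrow> ('l::monoid_add \<Rightarrow>\<^sub>0 complex)"
  assumes h: "alg_hom_mod I1 (ideal_gen R) D'"
    and a1: "\<And>x y. D (x+y) = D x + D y" and a2: "\<And>c x. D (smul c x) = smul c (D x)"
    and a3: "\<And>x y. D (x*y) = D x * D y" and a4: "D 1 = 1"
    and g: "\<And>g. D' (X g) - D (X g) \<in> ideal_gen R"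
  shows "D' x - D x \<in> ideal_gen R"
proof (rule F_induct[where P="\<lambda>x. D' x - D x \<in> ideal_gen R"])
  note hh = h[unfolded alg_hom_mod_def]
  show P1: "D' 1 - D 1 \<in> ideal_gen R" using hh a4 by simp
  show Ps: "D' (smul c x) - D (smul c x) \<in> ideal_gen R" if "D' x - D x \<in> ideal_gen R" for c x
  proof -
    have e: "D' (smul c x) - D (smul c x) = (D' (smul c x) - smul c (D' x)) + smul c (D' x - D x)"
      by (simp add: a2 smul_diff)
    have "(D' (smul c x) - smul c (D' x)) + smul c (D' x - D x) \<in> ideal_gen R"
      using hh that by (blast intro: ideal_gen.add ideal_smul)
    then show ?thesis by (simp only: e)
  qed
  show "D' 0 - D 0 \<in> ideal_gen R" using Ps[OF P1, of 0] by simp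
  show "D' (X g) - D (X g) \<in> ideal_gen R" for g by (rule g)
  show "D' (x + y) - D (x + y) \<in> ideal_gen R" if "D' x - D x \<in> ideal_gen R" "D' y - D y \<in> ideal_gen R" for x y
  proof -
    have e: "D' (x + y) - D (x + y) = (D' (x + y) - (D' x + D' y)) + ((D' x - D x) + (D' y - D y))"
      by (simp add: a1)
    have "(D' (x + y) - (D' x + D' y)) + ((D' x - D x) + (D' y - D y)) \<in> ideal_gen R"
      using hh that by (blast intro: ideal_gen.add)
    then show ?thesis by (simp only: e)
  qed
  show "D' (x * y) - D (x * y) \<in> ideal_gen R" if "D' x - D x \<in> ideal_gen R" "D' y - D y \<in> ideal_gen R" for x y
  proof -
    have e: "D' (x * y) - D (x * y) = (D' (x * y) - D' x * D' y) + ((D' x - D x) * D' y + D x * (D' y - D y))"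
      by (simp add: a3 algebra_simps)
    have "(D' (x * y) - D' x * D' y) + ((D' x - D x) * D' y + D x * (D' y - D y)) \<in> ideal_gen R"
      using hh that by (blast intro: ideal_gen.add ideal_gen.lmult ideal_gen.rmult)
    then show ?thesis by (simp only: e)
  qed
qed

lemma uniq_antihom:
  fixes D' D :: "F \<Rightarrow> ('l::monoid_add \<Rightarrow>\<^sub>0 complex)"
  assumes h: "alg_antihom_mod I1 (ideal_gen R) D'"
    and a1: "\<And>x y. D (x+y) = D x + D y" and a2: "\<And>c x. D (smul c x) = smul c (D x)"
    and a3: "\<And>x y. D (x*y) = D y * D x" and a4: "D 1 = 1"
    and g: "\<And>g. D' (X g) - D (X g) \<in> ideal_gen R"
  shows "D' x - D x \<in> ideal_gen R"
proof (rule F_induct[where P="\<lambda>x. D' x - D x \<in> ideal_gen R"])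
  note hh = h[unfolded alg_antihom_mod_def]
  show P1: "D' 1 - D 1 \<in> ideal_gen R" using hh a4 by simp
  show Ps: "D' (smul c x) - D (smul c x) \<in> ideal_gen R" if "D' x - D x \<in> ideal_gen R" for c x
  proof -
    have e: "D' (smul c x) - D (smul c x) = (D' (smul c x) - smul c (D' x)) + smul c (D' x - D x)"
      by (simp add: a2 smul_diff)
    have "(D' (smul c x) - smul c (D' x)) + smul c (D' x - D x) \<in> ideal_gen R"
      using hh that by (blast intro: ideal_gen.add ideal_smul)
    then show ?thesis by (simp only: e)
  qed
  show "D' 0 - D 0 \<in> ideal_gen R" using Ps[OF P1, of 0] by simp
  show "D' (X g) - D (X g) \<in> ideal_gen R" for g by (rule g)
  show "D' (x + y) - D (x + y) \<in> ideal_gen R" if "D' x - D x \<in> ideal_gen R" "D' y - D y \<in> ideal_gen R" for x y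
  proof -
    have e: "D' (x + y) - D (x + y) = (D' (x + y) - (D' x + D' y)) + ((D' x - D x) + (D' y - D y))"
      by (simp add: a1)
    have "(D' (x + y) - (D' x + D' y)) + ((D' x - D x) + (D' y - D y)) \<in> ideal_gen R"
      using hh that by (blast intro: ideal_gen.add)
    then show ?thesis by (simp only: e)
  qed
  show "D' (x * y) - D (x * y) \<in> ideal_gen R" if "D' x - D x \<in> ideal_gen R" "D' y - D y \<in> ideal_gen R" for x y
  proof -
    have e: "D' (x * y) - D (x * y) = (D' (x * y) - D' y * D' x) + ((D' y - D y) * D' x + D y * (D' x - D x))"
      by (simp add: a3 algebra_simps)
    have "(D' (x * y) - D' y * D' x) + ((D' y - D y) * D' x + D y * (D' x - D x)) \<in> ideal_gen R"
      using hh that by (blast intro: ideal_gen.add ideal_gen.lmult ideal_gen.rmult)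
    then show ?thesis by (simp only: e)
  qed
qed

lemma uniq_char:
  assumes h: "char_mod I1 e'" and g: "\<And>g. e' (X g) = em (X g)"
  shows "e' x = em x"
proof (rule F_induct[where P="\<lambda>x. e' x = em x"])
  note hh = h[unfolded char_mod_def]
  show P1: "e' 1 = em 1" using hh by (simp add: em_one)
  show Ps: "e' (smul c x) = em (smul c x)" if "e' x = em x" for c x using hh that by (simp add: em_smul)
  show "e' 0 = em 0" using Ps[OF P1, of 0] by simp
  show "e' (X g) = em (X g)" for g by (rule g)
  show "e' (x + y) = em (x + y)" if "e' x = em x" "e' y = em y" for x y using hh that by (simp add: em_add)
  show "e' (x * y) = em (x * y)" if "e' x = em x" "e' y = em y" for x y using hh that by (simp add: em_mult)
qed

lemma hom_eq:
  fixes A B :: "F \<Rightarrow> ('l::monoid_add \<Rightarrow>\<^sub>0 complex)"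
  assumes "\<And>x y. A (x+y) = A x + A y" "\<And>c x. A (smul c x) = smul c (A x)" "\<And>x y. A (x*y) = A x * A y" "A 1 = 1"
    and "\<And>x y. B (x+y) = B x + B y" "\<And>c x. B (smul c x) = smul c (B x)" "\<And>x y. B (x*y) = B x * B y" "B 1 = 1"
    and "\<And>g. A (X g) = B (X g)"
  shows "A x = B x"
proof (rule F_induct[where P="\<lambda>x. A x = B x"])
  show P1: "A 1 = B 1" using assms by simp
  show Ps: "A (smul c x) = B (smul c x)" if "A x = B x" for c x using assms that by simp
  show "A 0 = B 0" using Ps[OF P1, of 0] by simp
qed (use assms in simp_all)


lemma one_mono: "(1::'k::monoid_add \<Rightarrow>\<^sub>0 complex) = mono 0" by simp
lemma Bg_mono: "Bg s i = mono (Word [B s i])" by (simp add: Bg_def X_def)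
lemma Kg_mono: "Kg s = mono (Word [K s])" by (simp add: Kg_def X_def)

lemma tens21_one: "tens21 1 1 = 1"
  using tens21_single[of 0 0 1 0 1] by (simp add: zero_prod_def[symmetric])
lemma tens12_one: "tens12 1 1 = 1"
  using tens12_single[of 0 1 0 0 1] by (simp add: zero_prod_def[symmetric])
lemma tlift_zero: "tlift h 0 = 0"
  using tlift_add[of h 0 0] by simp

lemma tlift_tens: "tlift h (tens (mono u) (mono v)) = h (mono u) (mono v)"
  by (rule tlift_tens_mono)

lemma tlift_Dm_Bg: "tlift h (Dm (Bg s i)) = h (Bg s i) 1 + h (Kg s) (Bg s i)"
  unfolding Dm_Bg tlift_add using tlift_tens[of h "Word [B s i]" 0] tlift_tens[of h "Word [K s]" "Word [B s i]"]
  by (simp only: Bg_mono Kg_mono one_mono)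
lemma tlift_Dm_Kg: "tlift h (Dm (Kg s)) = h (Kg s) (Kg s)"
  unfolding Dm_Kg using tlift_tens[of h "Word [K s]" "Word [K s]"]
  by (simp only: Kg_mono)

lemma lookup1_pair: "Poly_Mapping.lookup (1::F2) (b,c) = Poly_Mapping.lookup (1::F) b * Poly_Mapping.lookup (1::F) c"
  by (metis tens_one lookup_tens)

lemma XB: "X (B s i) = Bg s i" by (simp add: Bg_def)
lemma XK: "X (K s) = Kg s" by (simp add: Kg_def)

lemma coassoc: "tlift (\<lambda>a b. tens21 (Dm a) b) (Dm x) = tlift (\<lambda>a b. tens12 a (Dm b)) (Dm x)"
proof (rule hom_eq[where A="\<lambda>x. tlift (\<lambda>a b. tens21 (Dm a) b) (Dm x)" and B="\<lambda>x. tlift (\<lambda>a b. tens12 a (Dm b)) (Dm x)"])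
  have m1: "tlift (\<lambda>a b. tens21 (Dm a) b) (z * w) = tlift (\<lambda>a b. tens21 (Dm a) b) z * tlift (\<lambda>a b. tens21 (Dm a) b) w" for z w
    by (rule tlift_mult) (simp add: mono_add Dm_mult tens21_mult)
  have m2: "tlift (\<lambda>a b. tens12 a (Dm b)) (z * w) = tlift (\<lambda>a b. tens12 a (Dm b)) z * tlift (\<lambda>a b. tens12 a (Dm b)) w" for z w
    by (rule tlift_mult) (simp add: mono_add Dm_mult tens12_mult)
  show "tlift (\<lambda>a b. tens21 (Dm a) b) (Dm (x * y)) = tlift (\<lambda>a b. tens21 (Dm a) b) (Dm x) * tlift (\<lambda>a b. tens21 (Dm a) b) (Dm y)" for x y
    by (simp add: Dm_mult m1)
  show "tlift (\<lambda>a b. tens12 a (Dm b)) (Dm (x * y)) = tlift (\<lambda>a b. tens12 a (Dm b)) (Dm x) * tlift (\<lambda>a b. tens12 a (Dm b)) (Dm y)" for x y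
    by (simp add: Dm_mult m2)
  show "tlift (\<lambda>a b. tens21 (Dm a) b) (Dm 1) = 1" by (simp add: Dm_one tlift_one tens21_one)
  show "tlift (\<lambda>a b. tens12 a (Dm b)) (Dm 1) = 1" by (simp add: Dm_one tlift_one tens12_one tens_one)
  show "tlift (\<lambda>a b. tens21 (Dm a) b) (Dm (x + y)) = tlift (\<lambda>a b. tens21 (Dm a) b) (Dm x) + tlift (\<lambda>a b. tens21 (Dm a) b) (Dm y)" for x y
    by (simp add: Dm_add tlift_add)
  show "tlift (\<lambda>a b. tens12 a (Dm b)) (Dm (x + y)) = tlift (\<lambda>a b. tens12 a (Dm b)) (Dm x) + tlift (\<lambda>a b. tens12 a (Dm b)) (Dm y)" for x y
    by (simp add: Dm_add tlift_add)
  show "tlift (\<lambda>a b. tens21 (Dm a) b) (Dm (smul c x)) = smul c (tlift (\<lambda>a b. tens21 (Dm a) b) (Dm x))" for c x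
    by (simp add: Dm_smul tlift_smul)
  show "tlift (\<lambda>a b. tens12 a (Dm b)) (Dm (smul c x)) = smul c (tlift (\<lambda>a b. tens12 a (Dm b)) (Dm x))" for c x
    by (simp add: Dm_smul tlift_smul)
  show "tlift (\<lambda>a b. tens21 (Dm a) b) (Dm (X g)) = tlift (\<lambda>a b. tens12 a (Dm b)) (Dm (X g))" for g
  proof (cases g)
    case (B s i)
    show ?thesis unfolding B XB tlift_Dm_Bg unfolding Dm_Bg Dm_Kg Dm_one tens_one
      by (rule poly_mapping_eqI, rename_tac k, case_tac k)
        (simp add: lookup_tens21 lookup_tens12 lookup_tens lookup_add tens21_add1 tens12_add2 lookup1_pair algebra_simps)
  next
    case (K s)
    show ?thesis unfolding K XK tlift_Dm_Kg unfolding Dm_Kg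
      by (rule poly_mapping_eqI, rename_tac k, case_tac k)
        (simp add: lookup_tens21 lookup_tens12 lookup_tens algebra_simps)
  qed
qed

lemma counit1: "tlift (\<lambda>a b. smul (em a) b) (Dm x) = x"
proof (rule hom_eq[where A="\<lambda>x. tlift (\<lambda>a b. smul (em a) b) (Dm x)" and B="\<lambda>x. x"])
  have m: "tlift (\<lambda>a b. smul (em a) b) (z * w) = tlift (\<lambda>a b. smul (em a) b) z * tlift (\<lambda>a b. smul (em a) b) w" for z w
    by (rule tlift_mult) (simp add: mono_add em_mult smul_mult_left[symmetric] smul_mult_right[symmetric] smul_smul mult.commute)
  show "tlift (\<lambda>a b. smul (em a) b) (Dm (x * y)) = tlift (\<lambda>a b. smul (em a) b) (Dm x) * tlift (\<lambda>a b. smul (em a) b) (Dm y)" for x y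
    by (simp add: Dm_mult m)
  show "tlift (\<lambda>a b. smul (em a) b) (Dm 1) = 1" by (simp add: Dm_one tlift_one em_one)
  show "tlift (\<lambda>a b. smul (em a) b) (Dm (x + y)) = tlift (\<lambda>a b. smul (em a) b) (Dm x) + tlift (\<lambda>a b. smul (em a) b) (Dm y)" for x y
    by (simp add: Dm_add tlift_add)
  show "tlift (\<lambda>a b. smul (em a) b) (Dm (smul c x)) = smul c (tlift (\<lambda>a b. smul (em a) b) (Dm x))" for c x
    by (simp add: Dm_smul tlift_smul)
  show "tlift (\<lambda>a b. smul (em a) b) (Dm (X g)) = X g" for g
    by (cases g) (simp_all only: XB XK tlift_Dm_Bg tlift_Dm_Kg em_Bg em_Kg smul_zero_c smul_one add_0)
qed simp_all

lemma counit2: "tlift (\<lambda>a b. smul (em b) a) (Dm x) = x"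
proof (rule hom_eq[where A="\<lambda>x. tlift (\<lambda>a b. smul (em b) a) (Dm x)" and B="\<lambda>x. x"])
  have m: "tlift (\<lambda>a b. smul (em b) a) (z * w) = tlift (\<lambda>a b. smul (em b) a) z * tlift (\<lambda>a b. smul (em b) a) w" for z w
    by (rule tlift_mult) (simp add: mono_add em_mult smul_mult_left[symmetric] smul_mult_right[symmetric] smul_smul mult.commute)
  show "tlift (\<lambda>a b. smul (em b) a) (Dm (x * y)) = tlift (\<lambda>a b. smul (em b) a) (Dm x) * tlift (\<lambda>a b. smul (em b) a) (Dm y)" for x y
    by (simp add: Dm_mult m)
  show "tlift (\<lambda>a b. smul (em b) a) (Dm 1) = 1" by (simp add: Dm_one tlift_one em_one)
  show "tlift (\<lambda>a b. smul (em b) a) (Dm (x + y)) = tlift (\<lambda>a b. smul (em b) a) (Dm x) + tlift (\<lambda>a b. smul (em b) a) (Dm y)" for x y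
    by (simp add: Dm_add tlift_add)
  show "tlift (\<lambda>a b. smul (em b) a) (Dm (smul c x)) = smul c (tlift (\<lambda>a b. smul (em b) a) (Dm x))" for c x
    by (simp add: Dm_smul tlift_smul)
  show "tlift (\<lambda>a b. smul (em b) a) (Dm (X g)) = X g" for g
    by (cases g) (simp_all only: XB XK tlift_Dm_Bg tlift_Dm_Kg em_Bg em_Kg em_one smul_zero_c smul_one add_0_right)
qed simp_all


lemma smul_sandwich: "P * smul c Q * R = smul c (P * Q * (R::'k::monoid_add \<Rightarrow>\<^sub>0 complex))"
  by (simp add: smul_mult_left[symmetric] smul_mult_right[symmetric] mult.assoc)

lemma mu_mult_single:
  "tlift (\<lambda>a b. Sm a * b) (z * Poly_Mapping.single q c)
   = smul c (Sm (mono (fst q)) * tlift (\<lambda>a b. Sm a * b) z * mono (snd q))"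
proof (induction z rule: pm_induct)
  case zero then show ?case by (simp add: tlift_zero)
next
  case (single p d)
  have "tlift (\<lambda>a b. Sm a * b) (Poly_Mapping.single p d * Poly_Mapping.single q c)
      = smul (d*c) (Sm (mono (fst q)) * Sm (mono (fst p)) * (mono (snd p) * mono (snd q)))"
    by (simp add: mult_single tlift_single mono_add Sm_mult)
  also have "\<dots> = smul c (Sm (mono (fst q)) * smul d (Sm (mono (fst p)) * mono (snd p)) * mono (snd q))"
    by (simp add: smul_mult_left[symmetric] smul_mult_right[symmetric] smul_smul mult.assoc mult.commute)
  finally show ?case by (simp add: tlift_single)
next
  case (add x y) then show ?case by (simp add: distrib_right distrib_left tlift_add smul_add)
qed

lemma mu_mult:
  assumes "tlift (\<lambda>a b. Sm a * b) z - smul c0 1 \<in> I1"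
  shows "tlift (\<lambda>a b. Sm a * b) (z * w) - smul c0 (tlift (\<lambda>a b. Sm a * b) w) \<in> I1"
proof (induction w rule: pm_induct)
  case zero then show ?case by (simp add: tlift_zero)
next
  case (single q c)
  have "tlift (\<lambda>a b. Sm a * b) (z * Poly_Mapping.single q c) - smul c0 (tlift (\<lambda>a b. Sm a * b) (Poly_Mapping.single q c))
     = smul c (Sm (mono (fst q)) * (tlift (\<lambda>a b. Sm a * b) z - smul c0 1) * mono (snd q))"
    by (simp add: mu_mult_single tlift_single algebra_simps smul_diff smul_mult_left[symmetric] smul_mult_right[symmetric] smul_smul mult.commute)
  moreover have "smul c (Sm (mono (fst q)) * (tlift (\<lambda>a b. Sm a * b) z - smul c0 1) * mono (snd q)) \<in> I1"
    using assms unfolding I1_def by (intro ideal_smul ideal_sandwich)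
  ultimately show ?case by simp
next
  case (add x y)
  have "tlift (\<lambda>a b. Sm a * b) (z * (x + y)) - smul c0 (tlift (\<lambda>a b. Sm a * b) (x + y))
    = (tlift (\<lambda>a b. Sm a * b) (z * x) - smul c0 (tlift (\<lambda>a b. Sm a * b) x))
      + (tlift (\<lambda>a b. Sm a * b) (z * y) - smul c0 (tlift (\<lambda>a b. Sm a * b) y))"
    by (simp add: distrib_left tlift_add smul_add)
  with add show ?case unfolding I1_def by (simp add: ideal_gen.add)
qed

lemma mu'_single_mult:
  "tlift (\<lambda>a b. a * Sm b) (Poly_Mapping.single p c * w)
   = smul c (mono (fst p) * tlift (\<lambda>a b. a * Sm b) w * Sm (mono (snd p)))"
proof (induction w rule: pm_induct)
  case zero then show ?case by (simp add: tlift_zero)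
next
  case (single q d)
  have "tlift (\<lambda>a b. a * Sm b) (Poly_Mapping.single p c * Poly_Mapping.single q d)
      = smul (c*d) (mono (fst p) * mono (fst q) * (Sm (mono (snd q)) * Sm (mono (snd p))))"
    by (simp add: mult_single tlift_single mono_add Sm_mult)
  also have "\<dots> = smul c (mono (fst p) * smul d (mono (fst q) * Sm (mono (snd q))) * Sm (mono (snd p)))"
    by (simp add: smul_mult_left[symmetric] smul_mult_right[symmetric] smul_smul mult.assoc)
  finally show ?case by (simp add: tlift_single)
next
  case (add x y) then show ?case by (simp add: distrib_right distrib_left tlift_add smul_add)
qed

lemma mu'_mult:
  assumes "tlift (\<lambda>a b. a * Sm b) w - smul c0 1 \<in> I1"
  shows "tlift (\<lambda>a b. a * Sm b) (z * w) - smul c0 (tlift (\<lambda>a b. a * Sm b) z) \<in> I1"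
proof (induction z rule: pm_induct)
  case zero then show ?case by (simp add: tlift_zero)
next
  case (single p c)
  have "tlift (\<lambda>a b. a * Sm b) (Poly_Mapping.single p c * w) - smul c0 (tlift (\<lambda>a b. a * Sm b) (Poly_Mapping.single p c))
     = smul c (mono (fst p) * (tlift (\<lambda>a b. a * Sm b) w - smul c0 1) * Sm (mono (snd p)))"
    by (simp add: mu'_single_mult tlift_single algebra_simps smul_diff smul_mult_left[symmetric] smul_mult_right[symmetric] smul_smul mult.commute)
  moreover have "smul c (mono (fst p) * (tlift (\<lambda>a b. a * Sm b) w - smul c0 1) * Sm (mono (snd p))) \<in> I1"
    using assms unfolding I1_def by (intro ideal_smul ideal_sandwich)
  ultimately show ?case by simp
next
  case (add x y)
  have "tlift (\<lambda>a b. a * Sm b) ((x + y) * w) - smul c0 (tlift (\<lambda>a b. a * Sm b) (x + y))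
    = (tlift (\<lambda>a b. a * Sm b) (x * w) - smul c0 (tlift (\<lambda>a b. a * Sm b) x))
      + (tlift (\<lambda>a b. a * Sm b) (y * w) - smul c0 (tlift (\<lambda>a b. a * Sm b) y))"
    by (simp add: distrib_right tlift_add smul_add)
  with add show ?case unfolding I1_def by (simp add: ideal_gen.add)
qed

lemma rel_acomm: "acomm (Kg s) (Bg t i) \<in> I1"
  unfolding I1_def by (rule ideal_gen.gen) (unfold Rel_def, blast)
lemma rel_KK: "Kg s * Kg (sneg s) - 1 \<in> I1"
  unfolding I1_def by (rule ideal_gen.gen) (cases s, simp_all add: Rel_def)
lemma rel_KK': "Kg (sneg s) * Kg s - 1 \<in> I1"
  unfolding I1_def by (rule ideal_gen.gen) (cases s, simp_all add: Rel_def)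

lemma antipode1: "tlift (\<lambda>a b. Sm a * b) (Dm x) - smul (em x) 1 \<in> I1"
proof (rule F_induct[where P="\<lambda>x. tlift (\<lambda>a b. Sm a * b) (Dm x) - smul (em x) 1 \<in> I1"])
  show "tlift (\<lambda>a b. Sm a * b) (Dm 0) - smul (em 0) 1 \<in> I1" by (simp add: Dm_zero tlift_zero em_zero)
  show "tlift (\<lambda>a b. Sm a * b) (Dm 1) - smul (em 1) 1 \<in> I1" by (simp add: Dm_one tlift_one em_one Sm_one)
  show "tlift (\<lambda>a b. Sm a * b) (Dm (X g)) - smul (em (X g)) 1 \<in> I1" for g
  proof (cases g)
    case (B s i)
    have "tlift (\<lambda>a b. Sm a * b) (Dm (X g)) - smul (em (X g)) 1 = acomm (Kg (sneg s)) (Bg s i)"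
      unfolding B XB tlift_Dm_Bg by (simp add: em_Bg Sm_Bg Sm_Kg Sm_one acomm_def add.commute)
    then show ?thesis using rel_acomm by simp
  next
    case (K s)
    have "tlift (\<lambda>a b. Sm a * b) (Dm (X g)) - smul (em (X g)) 1 = Kg (sneg s) * Kg s - 1"
      unfolding K XK tlift_Dm_Kg by (simp add: em_Kg Sm_Kg)
    then show ?thesis using rel_KK' by simp
  qed
  show "tlift (\<lambda>a b. Sm a * b) (Dm (x + y)) - smul (em (x + y)) 1 \<in> I1"
    if "tlift (\<lambda>a b. Sm a * b) (Dm x) - smul (em x) 1 \<in> I1" "tlift (\<lambda>a b. Sm a * b) (Dm y) - smul (em y) 1 \<in> I1" for x y
  proof -
    have e: "tlift (\<lambda>a b. Sm a * b) (Dm (x + y)) - smul (em (x + y)) 1 = (tlift (\<lambda>a b. Sm a * b) (Dm x) - smul (em x) 1) + (tlift (\<lambda>a b. Sm a * b) (Dm y) - smul (em y) 1)"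
      by (simp add: Dm_add tlift_add em_add smul_add_c)
    show ?thesis unfolding e using that unfolding I1_def by (rule ideal_gen.add)
  qed
  show "tlift (\<lambda>a b. Sm a * b) (Dm (smul c x)) - smul (em (smul c x)) 1 \<in> I1"
    if "tlift (\<lambda>a b. Sm a * b) (Dm x) - smul (em x) 1 \<in> I1" for c x
  proof -
    have e: "tlift (\<lambda>a b. Sm a * b) (Dm (smul c x)) - smul (em (smul c x)) 1 = smul c (tlift (\<lambda>a b. Sm a * b) (Dm x) - smul (em x) 1)"
      by (simp add: Dm_smul tlift_smul em_smul smul_diff smul_smul)
    show ?thesis unfolding e using that unfolding I1_def by (rule ideal_smul)
  qed
  show "tlift (\<lambda>a b. Sm a * b) (Dm (x * y)) - smul (em (x * y)) 1 \<in> I1"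
    if a: "tlift (\<lambda>a b. Sm a * b) (Dm x) - smul (em x) 1 \<in> I1" and b: "tlift (\<lambda>a b. Sm a * b) (Dm y) - smul (em y) 1 \<in> I1" for x y
  proof -
    have e: "tlift (\<lambda>a b. Sm a * b) (Dm (x * y)) - smul (em (x * y)) 1 =
       (tlift (\<lambda>a b. Sm a * b) (Dm x * Dm y) - smul (em x) (tlift (\<lambda>a b. Sm a * b) (Dm y)))
       + smul (em x) (tlift (\<lambda>a b. Sm a * b) (Dm y) - smul (em y) 1)"
      by (simp add: Dm_mult em_mult smul_diff smul_smul)
    show ?thesis unfolding e using mu_mult[OF a, of "Dm y"] b unfolding I1_def
      by (intro ideal_gen.add ideal_smul)
  qed
qed

lemma antipode2: "tlift (\<lambda>a b. a * Sm b) (Dm x) - smul (em x) 1 \<in> I1"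
proof (rule F_induct[where P="\<lambda>x. tlift (\<lambda>a b. a * Sm b) (Dm x) - smul (em x) 1 \<in> I1"])
  show "tlift (\<lambda>a b. a * Sm b) (Dm 0) - smul (em 0) 1 \<in> I1" by (simp add: Dm_zero tlift_zero em_zero)
  show "tlift (\<lambda>a b. a * Sm b) (Dm 1) - smul (em 1) 1 \<in> I1" by (simp add: Dm_one tlift_one em_one Sm_one)
  show "tlift (\<lambda>a b. a * Sm b) (Dm (X g)) - smul (em (X g)) 1 \<in> I1" for g
  proof (cases g)
    case (B s i)
    have "tlift (\<lambda>a b. a * Sm b) (Dm (X g)) - smul (em (X g)) 1
        = acomm (Kg s) (Bg s i) * Kg (sneg s) - Bg s i * (Kg s * Kg (sneg s) - 1)"
      unfolding B XB tlift_Dm_Bg by (simp add: em_Bg Sm_Bg Sm_one acomm_def algebra_simps)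
    moreover have "acomm (Kg s) (Bg s i) * Kg (sneg s) - Bg s i * (Kg s * Kg (sneg s) - 1) \<in> I1"
      using rel_acomm[of s s i] rel_KK[of s] unfolding I1_def
      by (intro ideal_diff[OF ideal_gen.rmult ideal_gen.lmult])
    ultimately show ?thesis by simp
  next
    case (K s)
    have "tlift (\<lambda>a b. a * Sm b) (Dm (X g)) - smul (em (X g)) 1 = Kg s * Kg (sneg s) - 1"
      unfolding K XK tlift_Dm_Kg by (simp add: em_Kg Sm_Kg)
    then show ?thesis using rel_KK by simp
  qed
  show "tlift (\<lambda>a b. a * Sm b) (Dm (x + y)) - smul (em (x + y)) 1 \<in> I1"
    if "tlift (\<lambda>a b. a * Sm b) (Dm x) - smul (em x) 1 \<in> I1" "tlift (\<lambda>a b. a * Sm b) (Dm y) - smul (em y) 1 \<in> I1" for x y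
  proof -
    have e: "tlift (\<lambda>a b. a * Sm b) (Dm (x + y)) - smul (em (x + y)) 1 = (tlift (\<lambda>a b. a * Sm b) (Dm x) - smul (em x) 1) + (tlift (\<lambda>a b. a * Sm b) (Dm y) - smul (em y) 1)"
      by (simp add: Dm_add tlift_add em_add smul_add_c)
    show ?thesis unfolding e using that unfolding I1_def by (rule ideal_gen.add)
  qed
  show "tlift (\<lambda>a b. a * Sm b) (Dm (smul c x)) - smul (em (smul c x)) 1 \<in> I1"
    if "tlift (\<lambda>a b. a * Sm b) (Dm x) - smul (em x) 1 \<in> I1" for c x
  proof -
    have e: "tlift (\<lambda>a b. a * Sm b) (Dm (smul c x)) - smul (em (smul c x)) 1 = smul c (tlift (\<lambda>a b. a * Sm b) (Dm x) - smul (em x) 1)"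
      by (simp add: Dm_smul tlift_smul em_smul smul_diff smul_smul)
    show ?thesis unfolding e using that unfolding I1_def by (rule ideal_smul)
  qed
  show "tlift (\<lambda>a b. a * Sm b) (Dm (x * y)) - smul (em (x * y)) 1 \<in> I1"
    if a: "tlift (\<lambda>a b. a * Sm b) (Dm x) - smul (em x) 1 \<in> I1" and b: "tlift (\<lambda>a b. a * Sm b) (Dm y) - smul (em y) 1 \<in> I1" for x y
  proof -
    have e: "tlift (\<lambda>a b. a * Sm b) (Dm (x * y)) - smul (em (x * y)) 1 =
       (tlift (\<lambda>a b. a * Sm b) (Dm x * Dm y) - smul (em y) (tlift (\<lambda>a b. a * Sm b) (Dm x)))
       + smul (em y) (tlift (\<lambda>a b. a * Sm b) (Dm x) - smul (em x) 1)"
      by (simp add: Dm_mult em_mult smul_diff smul_smul mult.commute)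
    show ?thesis unfolding e using mu'_mult[OF b, of "Dm x"] a unfolding I1_def
      by (intro ideal_gen.add ideal_smul)
  qed
qed


lemma I3_zero: "0 \<in> I3" by (simp add: I3_def ideal_gen.zero)

lemma Dm_hom: "alg_hom_mod I1 I2 Dm"
  unfolding alg_hom_mod_def
  by (auto simp: Dm_diff[symmetric] Dm_I1 Dm_add Dm_smul Dm_mult Dm_one)

lemma em_char: "char_mod I1 em"
  unfolding char_mod_def
proof (intro conjI allI impI)
  fix x y assume "x - y \<in> I1"
  then have "em (x - y) = 0" by (rule em_I1)
  then show "em x = em y" by (simp add: em_diff)
qed (simp_all add: em_add em_smul em_mult em_one)

lemma Sm_antihom: "alg_antihom_mod I1 I1 Sm"
  unfolding alg_antihom_mod_def
  by (auto simp: Sm_diff[symmetric] Sm_I1 Sm_add Sm_smul Sm_mult Sm_one)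

theorem mainTheorem2:
  shows "\<exists>D e S.
     alg_hom_mod I1 I2 D \<and> Delta_gens D \<and>
     (\<forall>D'. alg_hom_mod I1 I2 D' \<and> Delta_gens D' \<longrightarrow> (\<forall>x. D' x - D x \<in> I2)) \<and>
     char_mod I1 e \<and> eps_gens e \<and>
     (\<forall>e'. char_mod I1 e' \<and> eps_gens e' \<longrightarrow> (\<forall>x. e' x = e x)) \<and>
     alg_antihom_mod I1 I1 S \<and> S_gens S \<and>
     (\<forall>S'. alg_antihom_mod I1 I1 S' \<and> S_gens S' \<longrightarrow> (\<forall>x. S' x - S x \<in> I1)) \<and>
     hopf_axioms D e S"
proof (intro exI[of _ Dm] exI[of _ em] exI[of _ Sm] conjI allI impI)
  show "alg_hom_mod I1 I2 Dm" by (rule Dm_hom)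
  show "Delta_gens Dm" unfolding Delta_gens_def by (simp add: Dm_Bg Dm_Kg)
  show "D' x - Dm x \<in> I2" if "alg_hom_mod I1 I2 D' \<and> Delta_gens D'" for D' x
    unfolding I2_def
  proof (rule uniq_hom[where D'=D' and D=Dm])
    show "alg_hom_mod I1 (ideal_gen ({tens r 1 |r. r \<in> Rel} \<union> {tens 1 r |r. r \<in> Rel})) D'"
      using that by (simp add: I2_def)
    show "D' (X g) - Dm (X g) \<in> ideal_gen ({tens r 1 |r. r \<in> Rel} \<union> {tens 1 r |r. r \<in> Rel})" for g
      using that unfolding Delta_gens_def I2_def[symmetric]
      by (cases g) (simp_all add: XB XK Dm_Bg Dm_Kg)
  qed (simp_all add: Dm_add Dm_smul Dm_mult Dm_one)
  show "char_mod I1 em" by (rule em_char)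
  show "eps_gens em" unfolding eps_gens_def by (simp add: em_Bg em_Kg)
  show "e' x = em x" if "char_mod I1 e' \<and> eps_gens e'" for e' x
  proof (rule uniq_char[where e'=e'])
    show "char_mod I1 e'" using that by simp
    show "e' (X g) = em (X g)" for g
      using that unfolding eps_gens_def by (cases g) (simp_all add: XB XK em_Bg em_Kg)
  qed
  show "alg_antihom_mod I1 I1 Sm" by (rule Sm_antihom)
  show "S_gens Sm" unfolding S_gens_def by (simp add: Sm_Bg Sm_Kg)
  show "S' x - Sm x \<in> I1" if "alg_antihom_mod I1 I1 S' \<and> S_gens S'" for S' x
    unfolding I1_def
  proof (rule uniq_antihom[where D'=S' and D=Sm])
    show "alg_antihom_mod I1 (ideal_gen Rel) S'"
      using that by (simp add: I1_def)
    show "S' (X g) - Sm (X g) \<in> ideal_gen Rel" for g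
      using that unfolding S_gens_def I1_def[symmetric]
      by (cases g) (simp_all add: XB XK Sm_Bg Sm_Kg)
  qed (simp_all add: Sm_add Sm_smul Sm_mult Sm_one)
  show "hopf_axioms Dm em Sm"
    unfolding hopf_axioms_def
    by (simp add: Dm_hom em_char coassoc counit1 counit2 antipode1 antipode2 I3_zero)
qed


end
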